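(* Let $V$ be an irreducible integrable $\hat\tau(d,q)$-module with finite-dimensional weight spaces. Then there exists $\lambda\in P(V)$ such that $V_{\lambda+\eta}=0$ for all $\eta\in\dot Q_+\setminus\{0\}$.
   Context: Fix integers $n\ge2$, $d\ge2$. Let $q=(q_{ij})_{1\le i,j\le n}$ with $q_{ij}\in\mathbb C^\times$ roots of unity, $q_{ii}=1$, $q_{ij}=q_{ji}^{-1}$. The rational quantum torus $\mathbb C_q$ is the associative algebra generated by $t_1^{\pm1},\dots,t_n^{\pm1}$ with $t_it_i^{-1}=t_i^{-1}t_i=1$ and $t_it_j=q_{ij}t_jt_i$; for $a\in\mathbb Z^n$ put $t^a=t_1^{a_1}\cdots t_n^{a_n}$, so $t^at^b=f(a,b)t^bt^a$ with $f(a,b)=\prod_{i,j}q_{ji}^{a_jb_i}$. Let $\operatorname{rad}f=\{a\in\mathbb Z^n: f(a,b)=1\ \forall b\}$. $\tau(d,q)=\mathfrak{sl}_d(\mathbb C_q)$ is the Lie algebra (commutator bracket) of $d\times d$ matrices over $\mathbb C_q$ whose trace lies in $[\mathbb C_q,\mathbb C_q]$ (the span of $t^a$, $a\notin\operatorname{rad}f$). Let $J\subset\mathbb C_q\otimes\mathbb C_q$ be spanned by $x\otimes y+y\otimes x$ and $xy\otimes z+yz\otimes x+zx\otimes y$; for $a+b\in\operatorname{rad}f$ let $\langle t^a,t^b\rangle$ be the image of $t^a\otimes t^b$ in $(\mathbb C_q\otimes\mathbb C_q)/J$, and $HC_1(\mathbb C_q)$ their span. $\tilde\tau(d,q)=\tau(d,q)\oplus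 HC_1(\mathbb C_q)$ with $HC_1(\mathbb C_q)$ central and $[X\otimes t^a,Y\otimes t^b]=(XY\otimes t^at^b-YX\otimes t^bt^a)+\mathrm{Tr}(XY)\langle t^a,t^b\rangle$ if $a+b\in\operatorname{rad}f$ (no last term otherwise). $\hat\tau(d,q)=\tilde\tau(d,q)\oplus D$, $D=\bigoplus_i\mathbb Cd_i$, $[d_i,d_j]=0$, $[d_i,X\otimes t^a]=a_iX\otimes t^a$, $[d_i,\langle t^a,t^b\rangle]=(a_i+b_i)\langle t^a,t^b\rangle$. Put $c_i=\langle t_i,t_i^{-1}\rangle$. Let $\dot{\mathfrak h}$ be the trace-zero diagonal matrices (as $\dot{\mathfrak h}\otimes1$), $\mathfrak h=\dot{\mathfrak h}\oplus\bigoplus_i\mathbb Cc_i\oplus\bigoplus_i\mathbb Cd_i$. A $\hat\tau(d,q)$-module $V$ is integrable if $V=\bigoplus_{\lambda\in\mathfrak h^*}V_\lambda$ with $V_\lambda=\{v: hv=\lambda(h)v\ \forall h\in\mathfrak h\}$, and for every root $\alpha$ of $\mathfrak{sl}_d(\mathbb C)$ with root vector $x_\alpha$, every $m\in\mathbb Z^n$, $v\in V$ there is $k$ with $(x_\alpha\otimes t^m)^kv=0$. $P(V)=\{\lambda: V_\lambda\neq0\}$. $\dot Q_+$ denotes the set of non-negative integer combinations of the simple roots $\alpha_1,\dots,\alpha_{d-1}$ of $\mathfrak{sl}_d(\mathbb C)$ (with respect to $\dot{\mathfrak h}$ and upper triangular matrices), regarded in $\mathfrak h^*$ by letting them vanish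 on all $c_i,d_i$. *)

theory Defs
  imports Complex_Main "Jordan_Normal_Form.Matrix"
begin

text \<open>Elements of Z^n are functions nat => int vanishing at indices >= n.\<close>
definition zvec :: "nat \<Rightarrow> (nat \<Rightarrow> int) set" where
  "zvec n = {a. \<forall>i\<ge>n. a i = 0}"

definition unitvec :: "nat \<Rightarrow> nat \<Rightarrow> int" where
  "unitvec i = (\<lambda>k. if k = i then 1 else 0)"

definition vadd :: "(nat \<Rightarrow> int) \<Rightarrow> (nat \<Rightarrow> int) \<Rightarrow> nat \<Rightarrow> int" where
  "vadd a b = (\<lambda>k. a k + b k)"

definition vneg :: "(nat \<Rightarrow> int) \<Rightarrow> nat \<Rightarrow> int" where
  "vneg a = (\<lambda>k. - a k)"

definition qmatrix :: "nat \<Rightarrow> (nat \<Rightarrow> nat \<Rightarrow> complex) \<Rightarrow> bool" where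
  "qmatrix n q \<longleftrightarrow> (\<forall>i<n. \<forall>j<n. (\<exists>k::nat. k > 0 \<and> q i j ^ k = 1) \<and> q i j = inverse (q j i))
                    \<and> (\<forall>i<n. q i i = 1)"

text \<open>t^a t^b = f(a,b) t^b t^a,  f(a,b) = prod_{i,j} q_{ji}^{a_j b_i}.\<close>
definition fq :: "nat \<Rightarrow> (nat \<Rightarrow> nat \<Rightarrow> complex) \<Rightarrow> (nat \<Rightarrow> int) \<Rightarrow> (nat \<Rightarrow> int) \<Rightarrow> complex" where
  "fq n q a b = (\<Prod>i<n. \<Prod>j<n. q j i powi (a j * b i))"

text \<open>t^a t^b = sigma(a,b) t^(a+b), where t^a = t_1^a_1 ... t_n^a_n; sigma(a,b) = prod_{i>j} q_ij^(a_i b_j).\<close>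
definition sig :: "nat \<Rightarrow> (nat \<Rightarrow> nat \<Rightarrow> complex) \<Rightarrow> (nat \<Rightarrow> int) \<Rightarrow> (nat \<Rightarrow> int) \<Rightarrow> complex" where
  "sig n q a b = (\<Prod>i<n. \<Prod>j<i. q i j powi (a i * b j))"

definition radf :: "nat \<Rightarrow> (nat \<Rightarrow> nat \<Rightarrow> complex) \<Rightarrow> (nat \<Rightarrow> int) set" where
  "radf n q = {a \<in> zvec n. \<forall>b\<in>zvec n. fq n q a b = 1}"

definition mtrace :: "complex mat \<Rightarrow> complex" where
  "mtrace X = (\<Sum>i<dim_row X. X $$ (i, i))"

definition elem_mat :: "nat \<Rightarrow> nat \<Rightarrow> nat \<Rightarrow> complex mat" where
  "elem_mat d i j = mat d d (\<lambda>(k, l). if k = i \<and> l = j then 1 else 0)"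

definition diag_of :: "nat \<Rightarrow> (nat \<Rightarrow> complex) \<Rightarrow> complex mat" where
  "diag_of d x = mat d d (\<lambda>(k, l). if k = l then x k else 0)"

text \<open>X (x) t^a lies in tau(d,q) = sl_d(C_q) iff trace X (x) t^a lies in [C_q,C_q],
  i.e. iff trace X = 0 or a is not in rad f.\<close>
definition tau_elem :: "nat \<Rightarrow> nat \<Rightarrow> (nat \<Rightarrow> nat \<Rightarrow> complex) \<Rightarrow> complex mat \<Rightarrow> (nat \<Rightarrow> int) \<Rightarrow> bool" where
  "tau_elem n d q X a \<longleftrightarrow> X \<in> carrier_mat d d \<and> a \<in> zvec n \<and> (mtrace X = 0 \<or> a \<notin> radf n q)"

definition comm :: "('v::ab_group_add \<Rightarrow> 'v) \<Rightarrow> ('v \<Rightarrow> 'v) \<Rightarrow> 'v \<Rightarrow> 'v" where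
  "comm A B = (\<lambda>v. A (B v) - B (A v))"

text \<open>A representation of hat-tau(d,q) on the complex vector space ('v, sc), given by its
  values on the spanning elements: rho X a = action of X (x) t^a,
  z a b = action of <t^a,t^b> (a+b in rad f), D i = action of d_(i+1).
  Since tau = (+)_a {X : tau_elem X a} (x) t^a, HC_1 = (+)_(g in rad f) (span of t^a (x) t^b, a+b=g)/J_g
  (J being spanned by its homogeneous generators) and D = span d_i,
  a linear map hat-tau -> End(V) is exactly such data, linear in X and killing the
  generators of J; it is a Lie algebra homomorphism iff the bracket relations hold on spanning elements.\<close>
definition tau_hat_module ::
  "nat \<Rightarrow> nat \<Rightarrow> (nat \<Rightarrow> nat \<Rightarrow> complex) \<Rightarrow> (complex \<Rightarrow> 'v::ab_group_add \<Rightarrow> 'v)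
   \<Rightarrow> (complex mat \<Rightarrow> (nat \<Rightarrow> int) \<Rightarrow> 'v \<Rightarrow> 'v)
   \<Rightarrow> ((nat \<Rightarrow> int) \<Rightarrow> (nat \<Rightarrow> int) \<Rightarrow> 'v \<Rightarrow> 'v) \<Rightarrow> (nat \<Rightarrow> 'v \<Rightarrow> 'v) \<Rightarrow> bool" where
  "tau_hat_module n d q sc rho z D \<longleftrightarrow>
     vector_space sc
   \<comment> \<open>all operators are linear endomorphisms of V\<close>
   \<and> (\<forall>X a. tau_elem n d q X a \<longrightarrow> Vector_Spaces.linear sc sc (rho X a))
   \<and> (\<forall>a b. a \<in> zvec n \<and> b \<in> zvec n \<and> vadd a b \<in> radf n q \<longrightarrow> Vector_Spaces.linear sc sc (z a b))
   \<and> (\<forall>i<n. Vector_Spaces.linear sc sc (D i))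
   \<comment> \<open>linearity of X (x) t^a in X\<close>
   \<and> (\<forall>X Y a. tau_elem n d q X a \<and> tau_elem n d q Y a \<longrightarrow>
        rho (X + Y) a = (\<lambda>v. rho X a v + rho Y a v))
   \<and> (\<forall>X a c. tau_elem n d q X a \<longrightarrow> rho (c \<cdot>\<^sub>m X) a = (\<lambda>v. sc c (rho X a v)))
   \<comment> \<open>relations of J: x(x)y + y(x)x and xy(x)z + yz(x)x + zx(x)y (on monomials)\<close>
   \<and> (\<forall>a b. a \<in> zvec n \<and> b \<in> zvec n \<and> vadd a b \<in> radf n q \<longrightarrow>
        (\<forall>v. z a b v + z b a v = 0))
   \<and> (\<forall>a b c. a \<in> zvec n \<and> b \<in> zvec n \<and> c \<in> zvec n \<and> vadd (vadd a b) c \<in> radf n q \<longrightarrow>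
        (\<forall>v. sc (sig n q a b) (z (vadd a b) c v) + sc (sig n q b c) (z (vadd b c) a v)
             + sc (sig n q c a) (z (vadd c a) b v) = 0))
   \<comment> \<open>bracket [X(x)t^a, Y(x)t^b]\<close>
   \<and> (\<forall>X Y a b. tau_elem n d q X a \<and> tau_elem n d q Y b \<longrightarrow>
        comm (rho X a) (rho Y b) =
          (\<lambda>v. rho (sig n q a b \<cdot>\<^sub>m (X * Y) - sig n q b a \<cdot>\<^sub>m (Y * X)) (vadd a b) v
               + (if vadd a b \<in> radf n q then sc (mtrace (X * Y)) (z a b v) else 0)))
   \<comment> \<open>HC_1 is central\<close>
   \<and> (\<forall>X a b c. tau_elem n d q X a \<and> b \<in> zvec n \<and> c \<in> zvec n \<and> vadd b c \<in> radf n q \<longrightarrow>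
        comm (rho X a) (z b c) = (\<lambda>v. 0))
   \<and> (\<forall>a b c e. a \<in> zvec n \<and> b \<in> zvec n \<and> vadd a b \<in> radf n q \<and>
               c \<in> zvec n \<and> e \<in> zvec n \<and> vadd c e \<in> radf n q \<longrightarrow>
        comm (z a b) (z c e) = (\<lambda>v. 0))
   \<comment> \<open>derivations\<close>
   \<and> (\<forall>i<n. \<forall>j<n. comm (D i) (D j) = (\<lambda>v. 0))
   \<and> (\<forall>i<n. \<forall>X a. tau_elem n d q X a \<longrightarrow>
        comm (D i) (rho X a) = (\<lambda>v. sc (of_int (a i)) (rho X a v)))
   \<and> (\<forall>i<n. \<forall>a b. a \<in> zvec n \<and> b \<in> zvec n \<and> vadd a b \<in> radf n q \<longrightarrow>
        comm (D i) (z a b) = (\<lambda>v. sc (of_int (a i + b i)) (z a b v)))"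

text \<open>Weights lambda in h^* are encoded as (mu, gam, del): lambda(diag(x)) = sum_k mu_k x_k on
  trace-zero diagonal matrices (mu is determined up to an additive constant),
  lambda(c_i) = gam i, lambda(d_i) = del i.\<close>
definition weight_space ::
  "nat \<Rightarrow> nat \<Rightarrow> (complex \<Rightarrow> 'v::ab_group_add \<Rightarrow> 'v)
   \<Rightarrow> (complex mat \<Rightarrow> (nat \<Rightarrow> int) \<Rightarrow> 'v \<Rightarrow> 'v)
   \<Rightarrow> ((nat \<Rightarrow> int) \<Rightarrow> (nat \<Rightarrow> int) \<Rightarrow> 'v \<Rightarrow> 'v) \<Rightarrow> (nat \<Rightarrow> 'v \<Rightarrow> 'v)
   \<Rightarrow> (nat \<Rightarrow> complex) \<times> (nat \<Rightarrow> complex) \<times> (nat \<Rightarrow> complex) \<Rightarrow> 'v set" where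
  "weight_space n d sc rho z D lam =
     (case lam of (mu, gam, del) \<Rightarrow>
       {v. (\<forall>x. (\<Sum>k<d. x k) = 0 \<longrightarrow> rho (diag_of d x) (\<lambda>_. 0) v = sc (\<Sum>k<d. mu k * x k) v)
         \<and> (\<forall>i<n. z (unitvec i) (vneg (unitvec i)) v = sc (gam i) v)
         \<and> (\<forall>i<n. D i v = sc (del i) v)})"

definition weight_module ::
  "nat \<Rightarrow> nat \<Rightarrow> (complex \<Rightarrow> 'v::ab_group_add \<Rightarrow> 'v)
   \<Rightarrow> (complex mat \<Rightarrow> (nat \<Rightarrow> int) \<Rightarrow> 'v \<Rightarrow> 'v)
   \<Rightarrow> ((nat \<Rightarrow> int) \<Rightarrow> (nat \<Rightarrow> int) \<Rightarrow> 'v \<Rightarrow> 'v) \<Rightarrow> (nat \<Rightarrow> 'v \<Rightarrow> 'v) \<Rightarrow> bool" where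
  "weight_module n d sc rho z D \<longleftrightarrow>
     UNIV \<subseteq> module.span sc (\<Union>lam. weight_space n d sc rho z D lam)"

definition finite_weight_spaces ::
  "nat \<Rightarrow> nat \<Rightarrow> (complex \<Rightarrow> 'v::ab_group_add \<Rightarrow> 'v)
   \<Rightarrow> (complex mat \<Rightarrow> (nat \<Rightarrow> int) \<Rightarrow> 'v \<Rightarrow> 'v)
   \<Rightarrow> ((nat \<Rightarrow> int) \<Rightarrow> (nat \<Rightarrow> int) \<Rightarrow> 'v \<Rightarrow> 'v) \<Rightarrow> (nat \<Rightarrow> 'v \<Rightarrow> 'v) \<Rightarrow> bool" where
  "finite_weight_spaces n d sc rho z D \<longleftrightarrow>
     (\<forall>lam. \<exists>B. finite B \<and> weight_space n d sc rho z D lam \<subseteq> module.span sc B)"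

text \<open>Integrability: root vectors of sl_d are (multiples of) E_ij, i ~= j.\<close>
definition integrable ::
  "nat \<Rightarrow> nat \<Rightarrow> (complex \<Rightarrow> 'v::ab_group_add \<Rightarrow> 'v)
   \<Rightarrow> (complex mat \<Rightarrow> (nat \<Rightarrow> int) \<Rightarrow> 'v \<Rightarrow> 'v)
   \<Rightarrow> ((nat \<Rightarrow> int) \<Rightarrow> (nat \<Rightarrow> int) \<Rightarrow> 'v \<Rightarrow> 'v) \<Rightarrow> (nat \<Rightarrow> 'v \<Rightarrow> 'v) \<Rightarrow> bool" where
  "integrable n d sc rho z D \<longleftrightarrow>
     weight_module n d sc rho z D
   \<and> (\<forall>i<d. \<forall>j<d. i \<noteq> j \<longrightarrow> (\<forall>m\<in>zvec n. \<forall>v. \<exists>k::nat. (rho (elem_mat d i j) m ^^ k) v = 0))"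

definition irreducible_module ::
  "nat \<Rightarrow> nat \<Rightarrow> (nat \<Rightarrow> nat \<Rightarrow> complex) \<Rightarrow> (complex \<Rightarrow> 'v::ab_group_add \<Rightarrow> 'v)
   \<Rightarrow> (complex mat \<Rightarrow> (nat \<Rightarrow> int) \<Rightarrow> 'v \<Rightarrow> 'v)
   \<Rightarrow> ((nat \<Rightarrow> int) \<Rightarrow> (nat \<Rightarrow> int) \<Rightarrow> 'v \<Rightarrow> 'v) \<Rightarrow> (nat \<Rightarrow> 'v \<Rightarrow> 'v) \<Rightarrow> bool" where
  "irreducible_module n d q sc rho z D \<longleftrightarrow>
     (UNIV :: 'v set) \<noteq> {0}
   \<and> (\<forall>W. module.subspace sc W
        \<and> (\<forall>X a. tau_elem n d q X a \<longrightarrow> rho X a ` W \<subseteq> W)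
        \<and> (\<forall>a b. a \<in> zvec n \<and> b \<in> zvec n \<and> vadd a b \<in> radf n q \<longrightarrow> z a b ` W \<subseteq> W)
        \<and> (\<forall>i<n. D i ` W \<subseteq> W)
        \<longrightarrow> W = {0} \<or> W = UNIV)"

text \<open>eta = sum_{j < d-1} m_j alpha_(j+1), with alpha_(j+1)(diag x) = x_j - x_(j+1):
  its mu-part, vanishing on c_i, d_i.\<close>
definition root_comb :: "nat \<Rightarrow> (nat \<Rightarrow> nat) \<Rightarrow> nat \<Rightarrow> complex" where
  "root_comb d m = (\<lambda>k. (if k < d - 1 then of_nat (m k) else 0)
                       - (if 0 < k \<and> k < d then of_nat (m (k - 1)) else 0))"

definition shift_weight ::
  "nat \<Rightarrow> (nat \<Rightarrow> complex) \<times> (nat \<Rightarrow> complex) \<times> (nat \<Rightarrow> complex) \<Rightarrow> (nat \<Rightarrow> nat)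
   \<Rightarrow> (nat \<Rightarrow> complex) \<times> (nat \<Rightarrow> complex) \<times> (nat \<Rightarrow> complex)" where
  "shift_weight d lam m = (case lam of (mu, gam, del) \<Rightarrow> ((\<lambda>k. mu k + root_comb d m k), gam, del))"

end

theory Submission
  imports Defs
begin

lemma mtrace_carrier: "X \<in> carrier_mat d d \<Longrightarrow> mtrace X = (\<Sum>i<d. X $$ (i,i))"
  unfolding mtrace_def by auto

lemma rowcol: "A \<in> carrier_mat d d \<Longrightarrow> B \<in> carrier_mat d d \<Longrightarrow> i < d \<Longrightarrow> j < d \<Longrightarrow>
   row A i \<bullet> col B j = (\<Sum>k<d. A $$ (i,k) * B $$ (k,j))"
  by (auto simp: scalar_prod_def row_def col_def atLeast0LessThan intro!: sum.cong)

lemma prod_index: "A \<in> carrier_mat d d \<Longrightarrow> B \<in> carrier_mat d d \<Longrightarrow> i < d \<Longrightarrow> j < d \<Longrightarrow>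
   (A * B) $$ (i,j) = (\<Sum>k<d. A $$ (i,k) * B $$ (k,j))"
  by (simp add: rowcol)

lemma comm_shift_mat:
  fixes X Y :: "complex mat"
  assumes X: "X \<in> carrier_mat d d" and Y: "Y \<in> carrier_mat d d"
  shows "(X - a \<cdot>\<^sub>m 1\<^sub>m d) * (Y - b \<cdot>\<^sub>m 1\<^sub>m d) - (Y - b \<cdot>\<^sub>m 1\<^sub>m d) * (X - a \<cdot>\<^sub>m 1\<^sub>m d) = X * Y - Y * X"
proof (rule eq_matI)
  fix i j assume i: "i < dim_row (X * Y - Y * X)" and j: "j < dim_col (X * Y - Y * X)"
  have id: "i < d" "j < d" using i j X Y by auto
  have c: "X - a \<cdot>\<^sub>m 1\<^sub>m d \<in> carrier_mat d d" "Y - b \<cdot>\<^sub>m 1\<^sub>m d \<in> carrier_mat d d" using X Y by auto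
  have e1: "\<And>(A::complex mat) c. (\<Sum>k<d. (A $$ (i, k)) * (if k = j then c else 0)) = A $$ (i,j) * c"
  proof -
    fix A :: "complex mat" and c :: complex
    have "(\<Sum>k<d. (A $$ (i, k)) * (if k = j then c else 0)) = (\<Sum>k<d. if k = j then A $$ (i,j) * c else 0)" by (rule sum.cong) auto
    then show "(\<Sum>k<d. (A $$ (i, k)) * (if k = j then c else 0)) = A $$ (i,j) * c" using id by simp
  qed
  have e2: "\<And>(A::complex mat) c. (\<Sum>k<d. (if i = k then c else 0) * (A $$ (k, j))) = c * A $$ (i,j)"
  proof -
    fix A :: "complex mat" and c :: complex
    have "(\<Sum>k<d. (if i = k then c else 0) * (A $$ (k, j))) = (\<Sum>k<d. if i = k then c * A $$ (i,j) else 0)" by (rule sum.cong) auto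
    then show "(\<Sum>k<d. (if i = k then c else 0) * (A $$ (k, j))) = c * A $$ (i,j)" using id by simp
  qed
  note e = e1 e2
  show "((X - a \<cdot>\<^sub>m 1\<^sub>m d) * (Y - b \<cdot>\<^sub>m 1\<^sub>m d) - (Y - b \<cdot>\<^sub>m 1\<^sub>m d) * (X - a \<cdot>\<^sub>m 1\<^sub>m d)) $$ (i, j) = (X * Y - Y * X) $$ (i, j)"
    using id X Y c by (simp add: rowcol algebra_simps sum.distrib sum_subtractf e sum_distrib_left[symmetric])
next
  show "dim_row ((X - a \<cdot>\<^sub>m 1\<^sub>m d) * (Y - b \<cdot>\<^sub>m 1\<^sub>m d) - (Y - b \<cdot>\<^sub>m 1\<^sub>m d) * (X - a \<cdot>\<^sub>m 1\<^sub>m d)) = dim_row (X * Y - Y * X)"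
   "dim_col ((X - a \<cdot>\<^sub>m 1\<^sub>m d) * (Y - b \<cdot>\<^sub>m 1\<^sub>m d) - (Y - b \<cdot>\<^sub>m 1\<^sub>m d) * (X - a \<cdot>\<^sub>m 1\<^sub>m d)) = dim_col (X * Y - Y * X)" using X Y by auto
qed

lemma lin_add: "Vector_Spaces.linear s s f \<Longrightarrow> f (x + y) = f x + f y"
  by (simp add: Vector_Spaces.linear_iff)
lemma lin_scale: "Vector_Spaces.linear s s f \<Longrightarrow> f (s c x) = s c (f x)"
  by (simp add: Vector_Spaces.linear_iff)
lemma lin_zero: "Vector_Spaces.linear s s f \<Longrightarrow> f 0 = 0"
  using module_hom.zero module_hom_iff_linear by blast
lemma lin_diff: "Vector_Spaces.linear s s f \<Longrightarrow> f (x - y) = f x - f y"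
  using module_hom.diff module_hom_iff_linear by blast
lemma lin_neg: "Vector_Spaces.linear s s f \<Longrightarrow> f (- x) = - f x"
  using module_hom.neg module_hom_iff_linear by blast
lemma lin_sum: "Vector_Spaces.linear s s f \<Longrightarrow> f (sum g A) = (\<Sum>a\<in>A. f (g a))"
  using module_hom.sum module_hom_iff_linear by blast

definition Z0 :: "nat \<Rightarrow> int" where "Z0 = (\<lambda>_. 0)"

lemma Z0_zvec: "Z0 \<in> zvec n" unfolding Z0_def zvec_def by simp
lemma vadd_Z0: "vadd Z0 Z0 = Z0" by (simp add: Z0_def vadd_def)
lemma Z0_rad: "Z0 \<in> radf n q" by (simp add: radf_def zvec_def fq_def Z0_def)
lemma sig_Z0: "sig n q Z0 Z0 = 1" by (simp add: sig_def Z0_def)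

lemma dims[simp]: "dim_row (elem_mat d a b) = d" "dim_col (elem_mat d a b) = d"
  "dim_row (diag_of d x) = d" "dim_col (diag_of d x) = d"
  by (auto simp: elem_mat_def diag_of_def)

lemma elem_carrier[simp]: "elem_mat d a b \<in> carrier_mat d d" by (simp add: elem_mat_def)
lemma diag_carrier[simp]: "diag_of d x \<in> carrier_mat d d" by (simp add: diag_of_def)

lemma mtrace_shift: "X \<in> carrier_mat d d \<Longrightarrow> mtrace (X - c \<cdot>\<^sub>m 1\<^sub>m d) = mtrace X - c * of_nat d"
  by (simp add: mtrace_def carrier_matD sum_subtractf)

lemma mtrace_add: "X \<in> carrier_mat d d \<Longrightarrow> Y \<in> carrier_mat d d \<Longrightarrow> mtrace (X + Y) = mtrace X + mtrace Y"
  by (simp add: mtrace_def carrier_matD sum.distrib)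

lemma mtrace_smult: "X \<in> carrier_mat d d \<Longrightarrow> mtrace (c \<cdot>\<^sub>m X) = c * mtrace X"
  by (simp add: mtrace_def carrier_matD sum_distrib_left)

lemma mtrace_commutator:
  fixes X Y :: "complex mat"
  assumes X: "X \<in> carrier_mat d d" and Y: "Y \<in> carrier_mat d d"
  shows "mtrace (X * Y - Y * X) = 0"
proof -
  have "mtrace (X * Y - Y * X) = (\<Sum>i<d. \<Sum>k<d. X $$ (i,k) * Y $$ (k,i)) - (\<Sum>i<d. \<Sum>k<d. Y $$ (i,k) * X $$ (k,i))"
    using X Y by (simp add: mtrace_def carrier_matD rowcol[of _ d] sum_subtractf)
  also have "(\<Sum>i<d. \<Sum>k<d. Y $$ (i,k) * X $$ (k,i)) = (\<Sum>i<d. \<Sum>k<d. X $$ (i,k) * Y $$ (k,i))"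
    by (subst sum.swap) (simp add: mult.commute)
  finally show ?thesis by simp
qed

lemma elem_index: "i < d \<Longrightarrow> j < d \<Longrightarrow> elem_mat d a b $$ (i,j) = (if i = a \<and> j = b then 1 else 0)"
  by (simp add: elem_mat_def)

lemma mtrace_elem: "a < d \<Longrightarrow> mtrace (elem_mat d a b) = (if a = b then 1 else 0)"
proof (cases "a = b")
  case False
  have "mtrace (elem_mat d a b) = (\<Sum>i<d. 0)" unfolding mtrace_def
    by (rule sum.cong) (use False in \<open>auto simp: elem_index\<close>)
  then show ?thesis using False by simp
qed (auto simp: mtrace_def elem_index)

lemma elem_mult: assumes "a < d" "b < d" "c < d" "e < d"
  shows "elem_mat d a b * elem_mat d c e = (if b = c then elem_mat d a e else 0\<^sub>m d d)"
proof (rule eq_matI)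
  fix i j assume "i < dim_row (if b = c then elem_mat d a e else 0\<^sub>m d d)" "j < dim_col (if b = c then elem_mat d a e else 0\<^sub>m d d)"
  then have ij: "i < d" "j < d" by (auto split: if_splits simp: elem_mat_def)
  have "(elem_mat d a b * elem_mat d c e) $$ (i,j) = (\<Sum>k<d. (if i = a \<and> k = b then 1 else 0) * (if k = c \<and> j = e then 1 else 0))"
    using ij by (subst index_mult_mat) (auto simp: rowcol[of _ d] elem_index)
  also have "\<dots> = (\<Sum>k<d. if k = b then (if i = a \<and> b = c \<and> j = e then 1 else 0) else 0)"
    by (rule sum.cong) auto
  also have "\<dots> = (if i = a \<and> b = c \<and> j = e then 1 else 0)" using assms by simp
  finally show "(elem_mat d a b * elem_mat d c e) $$ (i,j) = (if b = c then elem_mat d a e else 0\<^sub>m d d) $$ (i,j)"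
    using ij by (auto simp: elem_index)
qed (auto simp: elem_mat_def)

lemma diag_mult_elem: assumes "p < d" "q < d"
  shows "diag_of d x * elem_mat d p q = x p \<cdot>\<^sub>m elem_mat d p q"
    and "elem_mat d p q * diag_of d x = x q \<cdot>\<^sub>m elem_mat d p q"
proof -
  show "diag_of d x * elem_mat d p q = x p \<cdot>\<^sub>m elem_mat d p q"
  proof (rule eq_matI)
    fix i j assume "i < dim_row (x p \<cdot>\<^sub>m elem_mat d p q)" "j < dim_col (x p \<cdot>\<^sub>m elem_mat d p q)"
    then have ij: "i < d" "j < d" by (auto simp: elem_mat_def)
    have "(diag_of d x * elem_mat d p q) $$ (i,j) = (\<Sum>k<d. (if i = k then x i else 0) * (if k = p \<and> j = q then 1 else 0))"
      using ij by (simp only: prod_index[of _ d] diag_carrier elem_carrier) (simp add: elem_index diag_of_def)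
    also have "\<dots> = (\<Sum>k<d. if k = i then (if i = p \<and> j = q then x p else 0) else 0)"
      by (rule sum.cong) auto
    finally show "(diag_of d x * elem_mat d p q) $$ (i,j) = (x p \<cdot>\<^sub>m elem_mat d p q) $$ (i,j)"
      using ij by (auto simp: elem_index)
  qed (auto simp: elem_mat_def diag_of_def)
  show "elem_mat d p q * diag_of d x = x q \<cdot>\<^sub>m elem_mat d p q"
  proof (rule eq_matI)
    fix i j assume "i < dim_row (x q \<cdot>\<^sub>m elem_mat d p q)" "j < dim_col (x q \<cdot>\<^sub>m elem_mat d p q)"
    then have ij: "i < d" "j < d" by (auto simp: elem_mat_def)
    have "(elem_mat d p q * diag_of d x) $$ (i,j) = (\<Sum>k<d. (if i = p \<and> k = q then 1 else 0) * (if k = j then x k else 0))"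
      using ij by (simp only: prod_index[of _ d] diag_carrier elem_carrier) (simp add: elem_index diag_of_def)
    also have "\<dots> = (\<Sum>k<d. if k = j then (if i = p \<and> j = q then x q else 0) else 0)"
      by (rule sum.cong) auto
    finally show "(elem_mat d p q * diag_of d x) $$ (i,j) = (x q \<cdot>\<^sub>m elem_mat d p q) $$ (i,j)"
      using ij by (auto simp: elem_index)
  qed (auto simp: elem_mat_def diag_of_def)
qed

lemma mtrace_diag: "mtrace (diag_of d x) = (\<Sum>k<d. x k)"
  by (simp add: mtrace_def diag_of_def)

lemma elem_diag: assumes "a < d" "0 < d"
  shows "elem_mat d a a - (1 / of_nat d) \<cdot>\<^sub>m 1\<^sub>m d = diag_of d (\<lambda>k. (if k = a then 1 else 0) - 1 / of_nat d)"
  by (rule eq_matI) (auto simp: elem_index diag_of_def)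

lemma minus_zero_smult: "X \<in> carrier_mat d d \<Longrightarrow> X - (0::complex) \<cdot>\<^sub>m 1\<^sub>m d = X"
  by (rule eq_matI) auto

lemma one_smult_m: "X \<in> carrier_mat d d \<Longrightarrow> (1::complex) \<cdot>\<^sub>m X = X"
  by (rule eq_matI) auto

locale TM =
  fixes n d :: nat and q :: "nat \<Rightarrow> nat \<Rightarrow> complex"
    and sc :: "complex \<Rightarrow> 'v::ab_group_add \<Rightarrow> 'v"
    and rho :: "complex mat \<Rightarrow> (nat \<Rightarrow> int) \<Rightarrow> 'v \<Rightarrow> 'v"
    and z :: "(nat \<Rightarrow> int) \<Rightarrow> (nat \<Rightarrow> int) \<Rightarrow> 'v \<Rightarrow> 'v"
    and D :: "nat \<Rightarrow> 'v \<Rightarrow> 'v"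
  assumes tmod: "tau_hat_module n d q sc rho z D" and d2: "2 \<le> d"
begin

lemmas TT = tmod[unfolded tau_hat_module_def]
lemma vs: "vector_space sc" using TT by (rule conjunct1)
lemmas T2 = TT[THEN conjunct2]
lemmas T3 = T2[THEN conjunct2]
lemmas T4 = T3[THEN conjunct2]
lemmas T5 = T4[THEN conjunct2]
lemmas T6 = T5[THEN conjunct2]
lemmas T7 = T6[THEN conjunct2]
lemmas T8 = T7[THEN conjunct2]
lemmas T9 = T8[THEN conjunct2]
lemmas T10 = T9[THEN conjunct2]
lemmas T11 = T10[THEN conjunct2]
lemmas T12 = T11[THEN conjunct2]
lemmas T13 = T12[THEN conjunct2]
lemmas T14 = T13[THEN conjunct2]

sublocale V: vector_space sc by (rule vs)

lemma rho_lin: "tau_elem n d q X a \<Longrightarrow> Vector_Spaces.linear sc sc (rho X a)"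
  using T2[THEN conjunct1] by blast
lemma rho_add: "tau_elem n d q X a \<Longrightarrow> tau_elem n d q Y a \<Longrightarrow> rho (X + Y) a v = rho X a v + rho Y a v"
  using T5[THEN conjunct1] by simp
lemma rho_smult: "tau_elem n d q X a \<Longrightarrow> rho (c \<cdot>\<^sub>m X) a v = sc c (rho X a v)"
  using T6[THEN conjunct1] by simp
lemma z_anti: "a \<in> zvec n \<Longrightarrow> b \<in> zvec n \<Longrightarrow> vadd a b \<in> radf n q \<Longrightarrow> z a b v + z b a v = 0"
  using T7[THEN conjunct1] by blast
lemma bracket: "tau_elem n d q X a \<Longrightarrow> tau_elem n d q Y b \<Longrightarrow>
        comm (rho X a) (rho Y b) =
          (\<lambda>v. rho (sig n q a b \<cdot>\<^sub>m (X * Y) - sig n q b a \<cdot>\<^sub>m (Y * X)) (vadd a b) v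
               + (if vadd a b \<in> radf n q then sc (mtrace (X * Y)) (z a b v) else 0))"
  using T9[THEN conjunct1] by blast
lemma z_central: "tau_elem n d q X a \<Longrightarrow> b \<in> zvec n \<Longrightarrow> c \<in> zvec n \<Longrightarrow> vadd b c \<in> radf n q \<Longrightarrow>
        comm (rho X a) (z b c) = (\<lambda>v. 0)"
  using T10[THEN conjunct1] by blast
lemma D_rho: "i < n \<Longrightarrow> tau_elem n d q X a \<Longrightarrow>
        comm (D i) (rho X a) = (\<lambda>v. sc (of_int (a i)) (rho X a v))"
  using T13[THEN conjunct1] by blast
lemma z_lin: "a \<in> zvec n \<Longrightarrow> b \<in> zvec n \<Longrightarrow> vadd a b \<in> radf n q \<Longrightarrow> Vector_Spaces.linear sc sc (z a b)"
  using T3[THEN conjunct1] by blast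
lemma D_lin: "i < n \<Longrightarrow> Vector_Spaces.linear sc sc (D i)"
  using T4[THEN conjunct1] by blast

lemma d0: "0 < d" using d2 by simp

lemma half: "x + x = 0 \<Longrightarrow> (x::'v) = 0"
proof -
  assume h: "x + x = 0"
  have "sc 2 x = sc (1 + 1) x" by simp
  also have "\<dots> = x + x" by (simp only: V.scale_left_distrib V.scale_one)
  finally have "sc 2 x = 0" using h by simp
  then have "sc (1/2) (sc 2 x) = 0" by simp
  then show "x = 0" by simp
qed

lemma z00: "z Z0 Z0 v = 0"
  using z_anti[OF Z0_zvec Z0_zvec, of v] vadd_Z0 Z0_rad half by metis

definition shiftm :: "complex mat \<Rightarrow> complex mat" where
  "shiftm X = X - (mtrace X / of_nat d) \<cdot>\<^sub>m 1\<^sub>m d"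

definition Rp :: "complex mat \<Rightarrow> 'v \<Rightarrow> 'v" where
  "Rp X = rho (shiftm X) Z0"

lemma shiftm_carrier: "X \<in> carrier_mat d d \<Longrightarrow> shiftm X \<in> carrier_mat d d"
  unfolding shiftm_def by (rule minus_carrier_mat) simp

lemma tau_shift: "X \<in> carrier_mat d d \<Longrightarrow> tau_elem n d q (shiftm X) Z0"
  using d0 shiftm_carrier[of X] by (simp add: tau_elem_def Z0_zvec shiftm_def mtrace_shift)

lemma Rp_lin: "X \<in> carrier_mat d d \<Longrightarrow> Vector_Spaces.linear sc sc (Rp X)"
  unfolding Rp_def by (rule rho_lin[OF tau_shift])

lemma Rp_trace0: "X \<in> carrier_mat d d \<Longrightarrow> mtrace X = 0 \<Longrightarrow> Rp X = rho X Z0"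
  by (simp add: Rp_def shiftm_def minus_zero_smult)

lemma shiftm_add: "X \<in> carrier_mat d d \<Longrightarrow> Y \<in> carrier_mat d d \<Longrightarrow> shiftm (X + Y) = shiftm X + shiftm Y"
  unfolding shiftm_def using mtrace_add[of X d Y]
  by (intro eq_matI) (auto simp: add_divide_distrib algebra_simps)

lemma shiftm_smult: "X \<in> carrier_mat d d \<Longrightarrow> shiftm (c \<cdot>\<^sub>m X) = c \<cdot>\<^sub>m shiftm X"
  unfolding shiftm_def using mtrace_smult[of X d c]
  by (intro eq_matI) (auto simp: algebra_simps)

lemma Rp_add: "X \<in> carrier_mat d d \<Longrightarrow> Y \<in> carrier_mat d d \<Longrightarrow> Rp (X + Y) v = Rp X v + Rp Y v"
  unfolding Rp_def by (simp add: shiftm_add rho_add tau_shift)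

lemma Rp_smult: "X \<in> carrier_mat d d \<Longrightarrow> Rp (c \<cdot>\<^sub>m X) v = sc c (Rp X v)"
  unfolding Rp_def by (simp add: shiftm_smult rho_smult tau_shift)

lemma Rp_diff: assumes "X \<in> carrier_mat d d" "Y \<in> carrier_mat d d" shows "Rp (X - Y) v = Rp X v - Rp Y v"
proof -
  have "X - Y = X + (-1) \<cdot>\<^sub>m Y" using assms by (intro eq_matI) auto
  then have "Rp (X - Y) v = Rp X v + sc (-1) (Rp Y v)" using assms by (simp add: Rp_add Rp_smult)
  then show ?thesis by simp
qed

lemma Rp_zero: "Rp (0\<^sub>m d d) v = 0"
proof -
  have "Rp (0\<^sub>m d d) v = Rp (0 \<cdot>\<^sub>m 0\<^sub>m d d) v" by simp
  also have "\<dots> = 0" by (subst Rp_smult) auto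
  finally show ?thesis .
qed

lemma Rp_comm: assumes X: "X \<in> carrier_mat d d" and Y: "Y \<in> carrier_mat d d"
  shows "Rp X (Rp Y v) - Rp Y (Rp X v) = Rp (X * Y - Y * X) v"
proof -
  have b: "comm (rho (shiftm X) Z0) (rho (shiftm Y) Z0) v = 
     rho (1 \<cdot>\<^sub>m (shiftm X * shiftm Y) - 1 \<cdot>\<^sub>m (shiftm Y * shiftm X)) Z0 v + sc (mtrace (shiftm X * shiftm Y)) (z Z0 Z0 v)"
    using bracket[OF tau_shift[OF X] tau_shift[OF Y]] by (simp add: sig_Z0 vadd_Z0 Z0_rad)
  have cx: "shiftm X * shiftm Y \<in> carrier_mat d d" "shiftm Y * shiftm X \<in> carrier_mat d d"
    using shiftm_carrier[OF X] shiftm_carrier[OF Y] by (meson mult_carrier_mat)+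
  have e: "1 \<cdot>\<^sub>m (shiftm X * shiftm Y) - 1 \<cdot>\<^sub>m (shiftm Y * shiftm X) = X * Y - Y * X"
    by (simp only: one_smult_m[OF cx(1)] one_smult_m[OF cx(2)]) (simp add: shiftm_def comm_shift_mat[OF X Y])
  have c2: "X * Y - Y * X \<in> carrier_mat d d" using X Y by auto
  have t: "mtrace (X * Y - Y * X) = 0" by (rule mtrace_commutator[OF X Y])
  have "Rp X (Rp Y v) - Rp Y (Rp X v) = rho (X*Y - Y*X) Z0 v" using b unfolding comm_def Rp_def by (simp add: e z00)
  then show ?thesis using Rp_trace0[OF c2 t] by simp
qed

definition E :: "nat \<Rightarrow> nat \<Rightarrow> 'v \<Rightarrow> 'v" where
  "E a b = Rp (elem_mat d a b)"

lemma E_lin: "Vector_Spaces.linear sc sc (E a b)"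
  unfolding E_def by (rule Rp_lin) simp

lemma E_add: "E a b (x + y) = E a b x + E a b y" using lin_add[OF E_lin] .
lemma E_scale: "E a b (sc c x) = sc c (E a b x)" using lin_scale[OF E_lin] .
lemma E_zero: "E a b 0 = 0" using lin_zero[OF E_lin] .
lemma E_diff: "E a b (x - y) = E a b x - E a b y" using lin_diff[OF E_lin] .
lemma E_sum: "E a b (sum g A) = (\<Sum>i\<in>A. E a b (g i))" using lin_sum[OF E_lin] .

lemma E_comm: assumes "a < d" "b < d" "p < d" "r < d"
  shows "E a b (E p r v) - E p r (E a b v) = (if b = p then E a r v else 0) - (if r = a then E p b v else 0)"
proof -
  have "E a b (E p r v) - E p r (E a b v) = Rp (elem_mat d a b * elem_mat d p r - elem_mat d p r * elem_mat d a b) v"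
    unfolding E_def by (rule Rp_comm) auto
  also have "\<dots> = Rp (if b = p then elem_mat d a r else 0\<^sub>m d d) v - Rp (if r = a then elem_mat d p b else 0\<^sub>m d d) v"
    using assms by (simp add: elem_mult Rp_diff)
  also have "\<dots> = (if b = p then E a r v else 0) - (if r = a then E p b v else 0)"
    by (simp add: E_def Rp_zero)
  finally show ?thesis .
qed

lemma E_trace0: "a \<noteq> b \<Longrightarrow> a < d \<Longrightarrow> E a b = rho (elem_mat d a b) Z0"
  unfolding E_def by (rule Rp_trace0) (auto simp: mtrace_elem)

end

context TM begin

abbreviation W where "W lam \<equiv> weight_space n d sc rho z D lam"

lemma W_mem: "v \<in> W (mu, g, de) \<longleftrightarrow>
   (\<forall>x. (\<Sum>k<d. x k) = 0 \<longrightarrow> rho (diag_of d x) Z0 v = sc (\<Sum>k<d. mu k * x k) v)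
   \<and> (\<forall>i<n. z (unitvec i) (vneg (unitvec i)) v = sc (g i) v)
   \<and> (\<forall>i<n. D i v = sc (de i) v)"
  by (simp add: weight_space_def Z0_def)

lemma tau_diag: "(\<Sum>k<d. x k) = 0 \<Longrightarrow> tau_elem n d q (diag_of d x) Z0"
  by (simp add: tau_elem_def Z0_zvec mtrace_diag)

lemma tau_elem0: "p \<noteq> r \<Longrightarrow> p < d \<Longrightarrow> tau_elem n d q (elem_mat d p r) Z0"
  by (simp add: tau_elem_def Z0_zvec mtrace_elem)

lemma unit_facts: "unitvec i \<in> zvec n \<or> i \<ge> n" "i < n \<Longrightarrow> vneg (unitvec i) \<in> zvec n"
   "vadd (unitvec i) (vneg (unitvec i)) \<in> radf n q"
proof -
  show "unitvec i \<in> zvec n \<or> i \<ge> n" by (auto simp: unitvec_def zvec_def)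
  show "i < n \<Longrightarrow> vneg (unitvec i) \<in> zvec n" by (auto simp: unitvec_def zvec_def vneg_def)
  have "vadd (unitvec i) (vneg (unitvec i)) = Z0" by (auto simp: unitvec_def vadd_def vneg_def Z0_def)
  then show "vadd (unitvec i) (vneg (unitvec i)) \<in> radf n q" using Z0_rad by simp
qed

lemma unit_zvec: "i < n \<Longrightarrow> unitvec i \<in> zvec n" using unit_facts(1)[of i] by linarith

lemma W_zero: "0 \<in> W (mu, g, de)"
proof -
  have "\<forall>x. (\<Sum>k<d. x k) = 0 \<longrightarrow> rho (diag_of d x) Z0 0 = sc (\<Sum>k<d. mu k * x k) 0"
    using lin_zero[OF rho_lin[OF tau_diag]] by simp
  moreover have "\<forall>i<n. z (unitvec i) (vneg (unitvec i)) 0 = sc (g i) 0"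
    using lin_zero[OF z_lin[OF unit_zvec unit_facts(2) unit_facts(3)]] by simp
  moreover have "\<forall>i<n. D i 0 = sc (de i) 0" using lin_zero[OF D_lin] by simp
  ultimately show ?thesis by (simp add: W_mem)
qed

lemma W_cong: assumes "\<And>k. k < d \<Longrightarrow> mu k = mu' k + c" shows "W (mu, g, de) = W (mu', g, de)"
proof -
  have "(\<Sum>k<d. mu k * x k) = (\<Sum>k<d. mu' k * x k)" if "(\<Sum>k<d. x k) = 0" for x
  proof -
    have "(\<Sum>k<d. mu k * x k) = (\<Sum>k<d. mu' k * x k + c * x k)"
      by (rule sum.cong) (auto simp: assms algebra_simps)
    also have "\<dots> = (\<Sum>k<d. mu' k * x k) + c * (\<Sum>k<d. x k)" by (simp add: sum.distrib sum_distrib_left)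
    finally show ?thesis using that by simp
  qed
  then show ?thesis by (auto simp: W_mem)
qed

lemma Rp_diag_W: assumes "v \<in> W (mu, g, de)" "(\<Sum>k<d. x k) = 0"
  shows "Rp (diag_of d x) v = sc (\<Sum>k<d. mu k * x k) v"
  using assms by (simp add: Rp_trace0 mtrace_diag W_mem)

lemma E_diag_W: assumes a: "a < d" and v: "v \<in> W (mu, g, de)"
  shows "E a a v = sc (mu a - (\<Sum>k<d. mu k) / of_nat d) v"
proof -
  define xa where "xa = (\<lambda>k. (if k = a then 1 else 0) - 1 / (of_nat d :: complex))"
  have sx: "(\<Sum>k<d. xa k) = 0" using a d0 by (simp add: xa_def sum_subtractf)
  have sh: "shiftm (elem_mat d a a) = diag_of d xa"
    unfolding shiftm_def xa_def using mtrace_elem[OF a, of a] elem_diag[OF a d0] by simp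
  have "E a a v = rho (diag_of d xa) Z0 v" by (simp add: E_def Rp_def sh)
  also have "\<dots> = sc (\<Sum>k<d. mu k * xa k) v" using v sx by (simp add: W_mem)
  also have "(\<Sum>k<d. mu k * xa k) = mu a - (\<Sum>k<d. mu k) / of_nat d"
    using a by (simp add: xa_def algebra_simps sum_subtractf sum_divide_distrib if_distrib[of "\<lambda>x. _ * x"] cong: if_cong)
  finally show ?thesis .
qed

definition sh :: "(nat \<Rightarrow> complex) \<Rightarrow> nat \<Rightarrow> nat \<Rightarrow> nat \<Rightarrow> complex" where
  "sh mu p r = (\<lambda>k. mu k + (if k = p then 1 else 0) - (if k = r then 1 else 0))"

lemma E_W: assumes pr: "p \<noteq> r" "p < d" "r < d" and v: "v \<in> W (mu, g, de)"
  shows "E p r v \<in> W (sh mu p r, g, de)"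
proof -
  have te: "tau_elem n d q (elem_mat d p r) Z0" using tau_elem0 pr by simp
  have Ee: "E p r = rho (elem_mat d p r) Z0" using E_trace0 pr by simp
  have 1: "rho (diag_of d x) Z0 (E p r v) = sc (\<Sum>k<d. sh mu p r k * x k) (E p r v)"
    if x: "(\<Sum>k<d. x k) = 0" for x
  proof -
    define s where "s = (\<Sum>k<d. mu k * x k)"
    have Rd: "Rp (diag_of d x) = rho (diag_of d x) Z0" using x by (simp add: Rp_trace0 mtrace_diag)
    have "Rp (diag_of d x) (E p r v) - E p r (Rp (diag_of d x) v)
       = Rp (diag_of d x * elem_mat d p r - elem_mat d p r * diag_of d x) v"
      unfolding E_def by (rule Rp_comm) auto
    also have "\<dots> = Rp (x p \<cdot>\<^sub>m elem_mat d p r - x r \<cdot>\<^sub>m elem_mat d p r) v"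
      using pr by (simp add: diag_mult_elem)
    also have "\<dots> = sc (x p) (E p r v) - sc (x r) (E p r v)"
      by (simp add: Rp_diff Rp_smult E_def)
    finally have h: "Rp (diag_of d x) (E p r v) - E p r (Rp (diag_of d x) v) = sc (x p) (E p r v) - sc (x r) (E p r v)" .
    have "E p r (Rp (diag_of d x) v) = sc s (E p r v)" using Rp_diag_W[OF v x] by (simp add: s_def E_scale)
    then have "Rp (diag_of d x) (E p r v) = sc s (E p r v) + sc (x p) (E p r v) - sc (x r) (E p r v)"
      using h by (simp add: algebra_simps)
    also have "\<dots> = sc (s + x p - x r) (E p r v)" by (simp add: V.scale_left_distrib V.scale_left_diff_distrib)
    also have "s + x p - x r = (\<Sum>k<d. sh mu p r k * x k)"
    proof -
      have "(\<Sum>k<d. sh mu p r k * x k) = (\<Sum>k<d. mu k * x k + (if k = p then x k else 0) - (if k = r then x k else 0))"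
        by (rule sum.cong) (auto simp: sh_def algebra_simps)
      also have "\<dots> = s + x p - x r" using pr by (simp add: sum.distrib sum_subtractf s_def)
      finally show ?thesis by simp
    qed
    finally show ?thesis using Rd by simp
  qed
  have 2: "z (unitvec i) (vneg (unitvec i)) (E p r v) = sc (g i) (E p r v)" if i: "i < n" for i
  proof -
    have "comm (rho (elem_mat d p r) Z0) (z (unitvec i) (vneg (unitvec i))) v = 0"
      using z_central[OF te unit_zvec[OF i] unit_facts(2)[OF i] unit_facts(3)] by simp
    then have "z (unitvec i) (vneg (unitvec i)) (E p r v) = E p r (z (unitvec i) (vneg (unitvec i)) v)"
      by (simp add: comm_def Ee)
    also have "\<dots> = sc (g i) (E p r v)" using v i by (simp add: W_mem E_scale)
    finally show ?thesis .
  qed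
  have 3: "D i (E p r v) = sc (de i) (E p r v)" if i: "i < n" for i
  proof -
    have "comm (D i) (rho (elem_mat d p r) Z0) v = 0"
      using D_rho[OF i te] by (simp add: Z0_def)
    then have "D i (E p r v) = E p r (D i v)" by (simp add: comm_def Ee)
    also have "\<dots> = sc (de i) (E p r v)" using v i by (simp add: W_mem E_scale)
    finally show ?thesis .
  qed
  show ?thesis using 1 2 3 by (simp add: W_mem)
qed

end

context TM begin

lemma sl2_chain:
  assumes linB: "Vector_Spaces.linear sc sc B"
    and Ax: "A x = 0"
    and hyp: "\<And>r. A (B ((B^^r) x)) - B (A ((B^^r) x)) = sc (lam - 2 * of_nat r) ((B^^r) x)"
  shows "A ((B^^(Suc r)) x) = sc (of_nat (Suc r) * (lam - of_nat r)) ((B^^r) x)"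
proof (induction r)
  case 0
  have "A (B x) = B (A x) + sc lam x" using hyp[of 0] by (simp add: algebra_simps)
  then show ?case using Ax lin_zero[OF linB] by simp
next
  case (Suc r)
  have "A ((B^^(Suc (Suc r))) x) = A (B ((B^^(Suc r)) x))" by simp
  also have "\<dots> = B (A ((B^^(Suc r)) x)) + sc (lam - 2 * of_nat (Suc r)) ((B^^(Suc r)) x)"
    using hyp[of "Suc r"] by (simp add: algebra_simps)
  also have "B (A ((B^^(Suc r)) x)) = sc (of_nat (Suc r) * (lam - of_nat r)) ((B^^(Suc r)) x)"
    using Suc by (simp add: lin_scale[OF linB])
  also have "sc (of_nat (Suc r) * (lam - of_nat r)) ((B^^(Suc r)) x) + sc (lam - 2 * of_nat (Suc r)) ((B^^(Suc r)) x)
     = sc (of_nat (Suc (Suc r)) * (lam - of_nat (Suc r))) ((B^^(Suc r)) x)"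
    by (simp only: V.scale_left_distrib[symmetric]) (simp add: algebra_simps)
  finally show ?case .
qed

definition shk :: "(nat \<Rightarrow> complex) \<Rightarrow> nat \<Rightarrow> nat \<Rightarrow> nat \<Rightarrow> nat \<Rightarrow> complex" where
  "shk mu p r m = (\<lambda>k. mu k + of_nat m * ((if k = p then 1 else 0) - (if k = r then 1 else 0)))"

lemma Epow_W: assumes pr: "p \<noteq> r" "p < d" "r < d" and v: "v \<in> W (mu, g, de)"
  shows "(E p r ^^ m) v \<in> W (shk mu p r m, g, de)"
proof (induction m)
  case 0
  have "shk mu p r 0 = mu" by (simp add: shk_def)
  then show ?case using v by simp
next
  case (Suc m)
  have "sh (shk mu p r m) p r = shk mu p r (Suc m)"
    by (rule ext) (simp add: sh_def shk_def algebra_simps)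
  then show ?case using E_W[OF pr Suc] by simp
qed

lemma EF_comm: assumes i: "Suc i < d" and w: "w \<in> W (nu, g, de)"
  shows "E i (Suc i) (E (Suc i) i w) - E (Suc i) i (E i (Suc i) w) = sc (nu i - nu (Suc i)) w"
proof -
  have "E i (Suc i) (E (Suc i) i w) - E (Suc i) i (E i (Suc i) w) = E i i w - E (Suc i) (Suc i) w"
    using E_comm[of i "Suc i" "Suc i" i w] i by simp
  also have "\<dots> = sc (nu i - nu (Suc i)) w"
  proof -
    have "E i i w - E (Suc i) (Suc i) w = sc (nu i - (\<Sum>k<d. nu k) / of_nat d) w - sc (nu (Suc i) - (\<Sum>k<d. nu k) / of_nat d) w"
      using E_diag_W[OF _ w, of i] E_diag_W[OF i w] i by simp
    also have "\<dots> = sc ((nu i - (\<Sum>k<d. nu k) / of_nat d) - (nu (Suc i) - (\<Sum>k<d. nu k) / of_nat d)) w"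
      by (rule V.scale_left_diff_distrib[symmetric])
    finally show ?thesis by simp
  qed
  finally show ?thesis .
qed

lemma shk_lab1: "Suc i < d \<Longrightarrow> shk mu i (Suc i) r i - shk mu i (Suc i) r (Suc i) = (mu i - mu (Suc i)) + 2 * of_nat r"
  by (simp add: shk_def)
lemma shk_lab2: "Suc i < d \<Longrightarrow> shk mu (Suc i) i r i - shk mu (Suc i) i r (Suc i) = (mu i - mu (Suc i)) - 2 * of_nat r"
  by (simp add: shk_def)

lemma chainE_F:
  assumes i: "Suc i < d" and v: "v \<in> W (mu, g, de)" and Fv: "E (Suc i) i v = 0"
  shows "E (Suc i) i ((E i (Suc i) ^^ Suc r) v) = sc (of_nat (Suc r) * (- (mu i - mu (Suc i)) - of_nat r)) ((E i (Suc i) ^^ r) v)"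
proof (rule sl2_chain[where B = "E i (Suc i)" and A = "E (Suc i) i", OF E_lin Fv])
  fix r
  have w: "(E i (Suc i) ^^ r) v \<in> W (shk mu i (Suc i) r, g, de)" using Epow_W[OF _ _ _ v] i by simp
  show "E (Suc i) i (E i (Suc i) ((E i (Suc i) ^^ r) v)) - E i (Suc i) (E (Suc i) i ((E i (Suc i) ^^ r) v))
     = sc (- (mu i - mu (Suc i)) - 2 * of_nat r) ((E i (Suc i) ^^ r) v)"
  proof -
    define w' where "w' = (E i (Suc i) ^^ r) v"
    have h: "E i (Suc i) (E (Suc i) i w') - E (Suc i) i (E i (Suc i) w') = sc ((mu i - mu (Suc i)) + 2 * of_nat r) w'"
      using EF_comm[OF i w[folded w'_def]] shk_lab1[OF i, of mu r] by simp
    have "E (Suc i) i (E i (Suc i) w') - E i (Suc i) (E (Suc i) i w') = - (E i (Suc i) (E (Suc i) i w') - E (Suc i) i (E i (Suc i) w'))"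
      by simp
    also have "\<dots> = - sc (((mu i - mu (Suc i)) + 2 * of_nat r)) w'" using h by (simp only:)
    also have "\<dots> = sc (- ((mu i - mu (Suc i)) + 2 * of_nat r)) w'" by (simp only: V.scale_minus_left)
    also have "- ((mu i - mu (Suc i)) + 2 * of_nat r) = - (mu i - mu (Suc i)) - 2 * of_nat r" by simp
    finally show ?thesis by (simp add: w'_def)
  qed
qed

lemma chainF_E:
  assumes i: "Suc i < d" and v: "v \<in> W (mu, g, de)" and Ev: "E i (Suc i) v = 0"
  shows "E i (Suc i) ((E (Suc i) i ^^ Suc r) v) = sc (of_nat (Suc r) * ((mu i - mu (Suc i)) - of_nat r)) ((E (Suc i) i ^^ r) v)"
proof (rule sl2_chain[where B = "E (Suc i) i" and A = "E i (Suc i)", OF E_lin Ev])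
  fix r
  have w: "(E (Suc i) i ^^ r) v \<in> W (shk mu (Suc i) i r, g, de)" using Epow_W[OF _ _ _ v] i by simp
  show "E i (Suc i) (E (Suc i) i ((E (Suc i) i ^^ r) v)) - E (Suc i) i (E i (Suc i) ((E (Suc i) i ^^ r) v))
     = sc ((mu i - mu (Suc i)) - 2 * of_nat r) ((E (Suc i) i ^^ r) v)"
    using EF_comm[OF i w] shk_lab2[OF i, of mu r] by simp
qed

lemma sc_eq0: "sc c x = 0 \<Longrightarrow> c \<noteq> 0 \<Longrightarrow> x = 0"
  by (metis V.scale_one V.scale_scale V.scale_zero_right field_class.field_inverse)

lemma first_zero:
  assumes "(A ^^ k) v = 0" "v \<noteq> 0"
  shows "\<exists>j. (A ^^ j) v \<noteq> 0 \<and> A ((A ^^ j) v) = 0"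
proof -
  define k0 where "k0 = (LEAST k. (A ^^ k) v = 0)"
  have k0: "(A ^^ k0) v = 0" unfolding k0_def by (rule LeastI[of _ k]) (rule assms(1))
  have "k0 \<noteq> 0"
  proof
    assume "k0 = 0" then show False using k0 assms(2) by simp
  qed
  then obtain j where j: "k0 = Suc j" by (cases k0) auto
  have "(A ^^ j) v \<noteq> 0" using not_less_Least[of j "\<lambda>k. (A ^^ k) v = 0"] j k0_def by auto
  moreover have "A ((A ^^ j) v) = 0" using k0 j by simp
  ultimately show ?thesis by blast
qed

end

locale TMI = TM +
  assumes integ: "integrable n d sc rho z D"
begin

lemma E_nil: assumes "p \<noteq> r" "p < d" "r < d" shows "\<exists>k. (E p r ^^ k) v = 0"
proof -
  have "\<forall>i<d. \<forall>j<d. i \<noteq> j \<longrightarrow> (\<forall>m\<in>zvec n. \<forall>v. \<exists>k::nat. (rho (elem_mat d i j) m ^^ k) v = 0)"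
    using integ unfolding integrable_def by (rule conjunct2)
  then have "\<exists>k::nat. (rho (elem_mat d p r) Z0 ^^ k) v = 0" using assms Z0_zvec by blast
  then show ?thesis using E_trace0[of p r] assms by simp
qed

lemma F_inj:
  assumes i: "Suc i < d" and v: "v \<in> W (mu, g, de)" "v \<noteq> 0"
    and lab: "\<And>r::nat. mu i - mu (Suc i) + of_nat r \<noteq> 0"
  shows "E (Suc i) i v \<noteq> 0"
proof
  assume Fv: "E (Suc i) i v = 0"
  have "(E i (Suc i) ^^ r) v \<noteq> 0" for r
  proof (induction r)
    case 0 then show ?case using v by simp
  next
    case (Suc r)
    show ?case
    proof
      assume h: "(E i (Suc i) ^^ Suc r) v = 0"
      have "sc (of_nat (Suc r) * (- (mu i - mu (Suc i)) - of_nat r)) ((E i (Suc i) ^^ r) v) = 0"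
        using chainE_F[OF i v(1) Fv, of r] h E_zero by simp
      moreover have "of_nat (Suc r) * (- (mu i - mu (Suc i)) - of_nat r) \<noteq> 0"
      proof -
        have "- (mu i - mu (Suc i)) - of_nat r = - (mu i - mu (Suc i) + of_nat r)" by simp
        then have "- (mu i - mu (Suc i)) - of_nat r \<noteq> 0" using lab[of r] by (simp only: neg_equal_0_iff_equal) simp
        moreover have "of_nat (Suc r) \<noteq> (0::complex)" by (rule of_nat_neq_0)
        ultimately show ?thesis by (simp only: mult_eq_0_iff de_Morgan_disj) simp 
      qed
      ultimately show False using sc_eq0 Suc by blast
    qed
  qed
  then show False using E_nil[of i "Suc i" v] i by auto
qed

lemma E_inj:
  assumes i: "Suc i < d" and v: "v \<in> W (mu, g, de)" "v \<noteq> 0"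
    and lab: "\<And>r::nat. mu i - mu (Suc i) - of_nat r \<noteq> 0"
  shows "E i (Suc i) v \<noteq> 0"
proof
  assume Ev: "E i (Suc i) v = 0"
  have "(E (Suc i) i ^^ r) v \<noteq> 0" for r
  proof (induction r)
    case 0 then show ?case using v by simp
  next
    case (Suc r)
    show ?case
    proof
      assume h: "(E (Suc i) i ^^ Suc r) v = 0"
      have "sc (of_nat (Suc r) * ((mu i - mu (Suc i)) - of_nat r)) ((E (Suc i) i ^^ r) v) = 0"
        using chainF_E[OF i v(1) Ev, of r] h E_zero by simp
      moreover have "of_nat (Suc r) * ((mu i - mu (Suc i)) - of_nat r) \<noteq> 0"
      proof -
        have "(mu i - mu (Suc i)) - of_nat r \<noteq> 0" using lab[of r] by simp
        moreover have "of_nat (Suc r) \<noteq> (0::complex)" by (rule of_nat_neq_0)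
        ultimately show ?thesis by (simp only: mult_eq_0_iff de_Morgan_disj) simp
      qed
      ultimately show False using sc_eq0 Suc by blast
    qed
  qed
  then show False using E_nil[of "Suc i" i v] i by auto
qed

lemma integral:
  assumes i: "Suc i < d" and v: "v \<in> W (mu, g, de)" "v \<noteq> 0"
  shows "\<exists>m::int. mu i - mu (Suc i) = of_int m"
proof -
  obtain k where "(E i (Suc i) ^^ k) v = 0" using E_nil[of i "Suc i" v] i by auto
  then obtain j where j: "(E i (Suc i) ^^ j) v \<noteq> 0" "E i (Suc i) ((E i (Suc i) ^^ j) v) = 0"
    using first_zero v(2) by blast
  define x where "x = (E i (Suc i) ^^ j) v"
  define nu where "nu = shk mu i (Suc i) j"
  have x: "x \<in> W (nu, g, de)" "x \<noteq> 0" "E i (Suc i) x = 0"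
    using Epow_W[OF _ _ _ v(1), of i "Suc i" j] i j by (auto simp: x_def nu_def)
  obtain k2 where "(E (Suc i) i ^^ k2) x = 0" using E_nil[of "Suc i" i x] i by auto
  then obtain s where s: "(E (Suc i) i ^^ s) x \<noteq> 0" "E (Suc i) i ((E (Suc i) i ^^ s) x) = 0"
    using first_zero x(2) by blast
  have "sc (of_nat (Suc s) * ((nu i - nu (Suc i)) - of_nat s)) ((E (Suc i) i ^^ s) x) = 0"
    using chainF_E[OF i x(1) x(3), of s] s(2) E_zero by simp
  then have "of_nat (Suc s) * ((nu i - nu (Suc i)) - of_nat s) = 0" using sc_eq0 s(1) by blast
  moreover have "of_nat (Suc s) \<noteq> (0::complex)" by (rule of_nat_neq_0)
  ultimately have "nu i - nu (Suc i) = of_nat s" by (simp only: mult_eq_0_iff) simp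
  then have "mu i - mu (Suc i) = of_int (int s - 2 * int j)"
    using shk_lab1[OF i, of mu j] nu_def by (simp add: eq_diff_eq)
  then show ?thesis by blast
qed

end

context TM begin

definition Om :: "'v \<Rightarrow> 'v" where
  "Om v = (\<Sum>a<d. \<Sum>b<d. E a b (E b a v))"

lemma Om_add: "Om (x + y) = Om x + Om y"
  by (simp add: Om_def E_add sum.distrib)

lemma Om_scale: "Om (sc c x) = sc c (Om x)"
  by (simp add: Om_def E_scale V.scale_sum_right)

lemma E_if: "E a b (if P then x else 0) = (if P then E a b x else 0)"
  by (simp add: E_zero)

lemma Om_term: assumes "a < d" "b < d" "p < d" "r < d"
  shows "E p r (E a b (E b a v)) = E a b (E b a (E p r v))
     - (if a = p then E a b (E b r v) else 0) + (if r = b then E a b (E p a v) else 0)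
     - (if b = p then E a r (E b a v) else 0) + (if r = a then E p b (E b a v) else 0)"
proof -
  have c1: "E a b (E p r (E b a v)) - E p r (E a b (E b a v)) = (if b = p then E a r (E b a v) else 0) - (if r = a then E p b (E b a v) else 0)"
    using E_comm assms by simp
  have c2: "E b a (E p r v) - E p r (E b a v) = (if a = p then E b r v else 0) - (if r = b then E p a v else 0)"
    using E_comm assms by simp
  have c3: "E a b (E p r (E b a v)) = E a b (E b a (E p r v)) - (if a = p then E a b (E b r v) else 0) + (if r = b then E a b (E p a v) else 0)"
  proof -
    have "E p r (E b a v) = E b a (E p r v) - ((if a = p then E b r v else 0) - (if r = b then E p a v else 0))"
      using c2 by (simp add: algebra_simps)
    then show ?thesis by (simp add: E_diff E_if)
  qed
  show ?thesis using c1 c3 by (simp add: algebra_simps)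
qed

lemma double_delta:
  fixes f :: "nat \<Rightarrow> nat \<Rightarrow> 'v"
  assumes "p < d"
  shows "(\<Sum>a<d. \<Sum>b<d. if a = p then f a b else 0) = (\<Sum>b<d. f p b)"
    and "(\<Sum>a<d. \<Sum>b<d. if p = b then f a b else 0) = (\<Sum>a<d. f a p)"
    and "(\<Sum>a<d. \<Sum>b<d. if b = p then f a b else 0) = (\<Sum>a<d. f a p)"
    and "(\<Sum>a<d. \<Sum>b<d. if p = a then f a b else 0) = (\<Sum>b<d. f p b)"
proof -
  have i1: "\<And>a. (\<Sum>b<d. if a = p then f a b else 0) = (if a = p then (\<Sum>b<d. f a b) else 0)" by simp
  show "(\<Sum>a<d. \<Sum>b<d. if a = p then f a b else 0) = (\<Sum>b<d. f p b)"
    using assms by (simp only: i1) simp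
  have i2: "\<And>a. (\<Sum>b<d. if p = a then f a b else 0) = (if a = p then (\<Sum>b<d. f a b) else 0)" by auto
  show "(\<Sum>a<d. \<Sum>b<d. if p = a then f a b else 0) = (\<Sum>b<d. f p b)"
    using assms by (simp only: i2) simp
  show "(\<Sum>a<d. \<Sum>b<d. if p = b then f a b else 0) = (\<Sum>a<d. f a p)"
    using assms by simp
  show "(\<Sum>a<d. \<Sum>b<d. if b = p then f a b else 0) = (\<Sum>a<d. f a p)"
    using assms by simp
qed

lemma Om_comm: assumes "p < d" "r < d" shows "Om (E p r v) = E p r (Om v)"
proof -
  have "E p r (Om v) = (\<Sum>a<d. \<Sum>b<d. E p r (E a b (E b a v)))" by (simp add: Om_def E_sum)
  also have "\<dots> = (\<Sum>a<d. \<Sum>b<d. E a b (E b a (E p r v))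
     - (if a = p then E a b (E b r v) else 0) + (if r = b then E a b (E p a v) else 0)
     - (if b = p then E a r (E b a v) else 0) + (if r = a then E p b (E b a v) else 0))"
    using assms by (intro sum.cong refl) (simp add: Om_term)
  also have "\<dots> = Om (E p r v)
     - (\<Sum>a<d. \<Sum>b<d. if a = p then E a b (E b r v) else 0) + (\<Sum>a<d. \<Sum>b<d. if r = b then E a b (E p a v) else 0)
     - (\<Sum>a<d. \<Sum>b<d. if b = p then E a r (E b a v) else 0) + (\<Sum>a<d. \<Sum>b<d. if r = a then E p b (E b a v) else 0)"
    by (simp add: Om_def sum.distrib sum_subtractf)
  also have "\<dots> = Om (E p r v)"
    using double_delta[OF assms(1)] double_delta[OF assms(2)] assms by simp
  finally show ?thesis by simp
qed

definition mbar :: "(nat \<Rightarrow> complex) \<Rightarrow> complex" where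
  "mbar mu = (\<Sum>k<d. mu k) / of_nat d"

definition cas :: "(nat \<Rightarrow> complex) \<Rightarrow> complex" where
  "cas mu = (\<Sum>a<d. \<Sum>b<d. if a < b then mu a - mu b else if a = b then (mu a - mbar mu)^2 else 0)"

lemma Om_hw: assumes w: "w \<in> W (mu, g, de)" and hw: "\<And>a b. a < b \<Longrightarrow> b < d \<Longrightarrow> E a b w = 0"
  shows "Om w = sc (cas mu) w"
proof -
  have t: "E a b (E b a w) = sc (if a < b then mu a - mu b else if a = b then (mu a - mbar mu)^2 else 0) w"
    if ab: "a < d" "b < d" for a b
  proof (cases "a < b")
    case True
    have "E a b (E b a w) - E b a (E a b w) = E a a w - E b b w" using E_comm[of a b b a w] ab by simp
    then have "E a b (E b a w) = sc (mu a - mbar mu) w - sc (mu b - mbar mu) w"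
      using hw[OF True ab(2)] E_zero E_diag_W[OF ab(1) w] E_diag_W[OF ab(2) w] by (simp add: mbar_def)
    also have "\<dots> = sc ((mu a - mbar mu) - (mu b - mbar mu)) w" by (rule V.scale_left_diff_distrib[symmetric])
    finally show ?thesis using True by simp
  next
    case False
    show ?thesis
    proof (cases "a = b")
      case True
      have "E a a (E a a w) = sc ((mu a - mbar mu) * (mu a - mbar mu)) w"
        using E_diag_W[OF ab(1) w] by (simp add: E_scale mbar_def)
      then show ?thesis using True by (simp add: power2_eq_square)
    next
      case False2: False
      have "b < a" using False False2 by simp
      then show ?thesis using hw[of b a] ab False False2 E_zero by simp
    qed
  qed
  have "Om w = (\<Sum>a<d. \<Sum>b<d. sc (if a < b then mu a - mu b else if a = b then (mu a - mbar mu)^2 else 0) w)"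
    unfolding Om_def by (intro sum.cong refl) (simp add: t)
  also have "\<dots> = sc (cas mu) w" by (simp add: cas_def V.scale_sum_left)
  finally show ?thesis .
qed

end

context TM begin

lemma kill_list:
  fixes A :: "'i \<Rightarrow> 'v \<Rightarrow> 'v" and xs :: "'i list" and Inv :: "'v \<Rightarrow> bool"
  assumes nil: "\<And>i u. i \<in> set xs \<Longrightarrow> \<exists>k. (A i ^^ k) u = 0"
    and inv: "\<And>i u. i \<in> set xs \<Longrightarrow> Inv u \<Longrightarrow> Inv (A i u)"
    and ord: "\<And>p u j. p < length xs \<Longrightarrow> Inv u \<Longrightarrow> (\<forall>j<p. A (xs!j) u = 0) \<Longrightarrow> j < p \<Longrightarrow> A (xs!j) (A (xs!p) u) = 0"
    and v: "Inv v" "v \<noteq> 0"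
  shows "\<exists>w. Inv w \<and> w \<noteq> 0 \<and> (\<forall>j<length xs. A (xs!j) w = 0)"
proof -
  have "m \<le> length xs \<Longrightarrow> \<exists>w. Inv w \<and> w \<noteq> 0 \<and> (\<forall>j<m. A (xs!j) w = 0)" for m
  proof (induction m)
    case 0 then show ?case using v by auto
  next
    case (Suc m)
    then obtain w where w: "Inv w" "w \<noteq> 0" "\<forall>j<m. A (xs!j) w = 0" by auto
    have m: "m < length xs" using Suc by simp
    then have xm: "xs!m \<in> set xs" by simp
    have pw: "Inv ((A (xs!m) ^^ s) w) \<and> (\<forall>j<m. A (xs!j) ((A (xs!m) ^^ s) w) = 0)" for s
    proof (induction s)
      case 0 then show ?case using w by simp
    next
      case (Suc s)
      then show ?case using inv[OF xm] ord[OF m] by simp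
    qed
    obtain k where "(A (xs!m) ^^ k) w = 0" using nil[OF xm] by blast
    then obtain s where s: "(A (xs!m) ^^ s) w \<noteq> 0" "A (xs!m) ((A (xs!m) ^^ s) w) = 0"
      using first_zero w(2) by blast
    show ?case
      by (rule exI[of _ "(A (xs!m) ^^ s) w"]) (use pw[of s] s in \<open>auto simp: less_Suc_eq\<close>)
  qed
  then show ?thesis by blast
qed

end

definition poslist :: "nat \<Rightarrow> (nat \<times> nat) list" where
  "poslist d = sort_key (\<lambda>(a,b). int a - int b) [(a,b). a \<leftarrow> [0..<d], b \<leftarrow> [0..<d], a < b]"

lemma set_poslist: "set (poslist d) = {(a,b). a < b \<and> b < d}"
  by (auto simp: poslist_def)

lemma poslist_order:
  assumes p: "p < length (poslist d)" and x: "x \<in> set (poslist d)"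
    and lt: "(\<lambda>(a,b). int a - int b) x < (\<lambda>(a,b). int a - int b) (poslist d ! p)"
  shows "\<exists>j<p. poslist d ! j = x"
proof -
  obtain j where j: "j < length (poslist d)" "poslist d ! j = x" using x by (auto simp: in_set_conv_nth)
  have s: "sorted (map (\<lambda>(a,b). int a - int b) (poslist d))" by (simp add: poslist_def)
  have "j < p"
  proof (rule ccontr)
    assume "\<not> j < p"
    then have "p \<le> j" by simp
    then have "map (\<lambda>(a,b). int a - int b) (poslist d) ! p \<le> map (\<lambda>(a,b). int a - int b) (poslist d) ! j"
      using s j(1) by (intro sorted_nth_mono) auto
    then show False using lt j p by simp
  qed
  then show ?thesis using j by blast
qed

definition Lc :: "nat \<Rightarrow> (nat \<Rightarrow> int) \<Rightarrow> int" where
  "Lc d y = (\<Sum>a<d. (int d - 1 - 2 * int a) * y a)"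

definition ish :: "(nat \<Rightarrow> int) \<Rightarrow> nat \<Rightarrow> nat \<Rightarrow> nat \<Rightarrow> int" where
  "ish y p r = (\<lambda>k. y k + (if k = p then 1 else 0) - (if k = r then 1 else 0))"

lemma Lc_ish: assumes "p < d" "r < d" "p \<noteq> r"
  shows "Lc d (ish y p r) = Lc d y + 2 * int r - 2 * int p"
proof -
  have "Lc d (ish y p r) = (\<Sum>a<d. (int d - 1 - 2 * int a) * y a + (if a = p then int d - 1 - 2 * int a else 0)
      - (if a = r then int d - 1 - 2 * int a else 0))"
    unfolding Lc_def ish_def by (intro sum.cong refl) (auto simp: algebra_simps)
  also have "\<dots> = Lc d y + (int d - 1 - 2 * int p) - (int d - 1 - 2 * int r)"
    using assms by (simp add: sum.distrib sum_subtractf Lc_def)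
  finally show ?thesis by simp
qed

lemma Lc_pairs: "(\<Sum>a<N. \<Sum>b<N. if a < b then y a - y b else 0) = (\<Sum>a<N. (int N - 1 - 2 * int a) * (y a :: int))"
proof (induction N)
  case 0 then show ?case by simp
next
  case (Suc N)
  have "(\<Sum>a<Suc N. \<Sum>b<Suc N. if a < b then y a - y b else 0)
      = (\<Sum>a<N. \<Sum>b<N. if a < b then y a - y b else 0) + (\<Sum>a<N. y a - y N)"
    by (simp add: sum.distrib)
  also have "\<dots> = (\<Sum>a<N. (int N - 1 - 2 * int a) * y a) + (\<Sum>a<N. y a) - int N * y N"
    using Suc by (simp add: sum_subtractf)
  also have "\<dots> = (\<Sum>a<N. (int N - 1 - 2 * int a) * y a + y a) - int N * y N"
    by (simp add: sum.distrib)
  also have "(\<Sum>a<N. (int N - 1 - 2 * int a) * y a + y a) = (\<Sum>a<N. (int (Suc N) - 1 - 2 * int a) * y a)"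
    by (rule sum.cong) (auto simp: algebra_simps)
  also have "(\<Sum>a<N. (int (Suc N) - 1 - 2 * int a) * y a) - int N * y N = (\<Sum>a<Suc N. (int (Suc N) - 1 - 2 * int a) * y a)"
    by (simp add: algebra_simps)
  finally show ?case .
qed

definition ci :: "(nat \<Rightarrow> int) \<Rightarrow> nat \<Rightarrow> complex" where
  "ci y = (\<lambda>k. of_int (y k))"

context TMI begin

lemma sh_ci: "sh (ci y) p r = ci (ish y p r)"
  by (rule ext) (simp add: sh_def ci_def ish_def)

lemma E_Wi: "p \<noteq> r \<Longrightarrow> p < d \<Longrightarrow> r < d \<Longrightarrow> v \<in> W (ci y, g, de) \<Longrightarrow> E p r v \<in> W (ci (ish y p r), g, de)"
  using E_W[of p r v "ci y" g de] by (simp add: sh_ci)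

lemma hw_exists:
  assumes v: "v \<in> W (ci y, g, de)" "v \<noteq> 0"
  shows "\<exists>w y'. w \<in> W (ci y', g, de) \<and> w \<noteq> 0 \<and> Lc d y \<le> Lc d y' \<and> (\<forall>a b. a < b \<longrightarrow> b < d \<longrightarrow> E a b w = 0)"
proof -
  define Inv where "Inv u \<longleftrightarrow> (\<exists>y'. u \<in> W (ci y', g, de) \<and> Lc d y \<le> Lc d y')" for u
  define A where "A = (\<lambda>(a::nat,b::nat). E a b)"
  define xs where "xs = poslist d"
  have key: "\<exists>w. Inv w \<and> w \<noteq> 0 \<and> (\<forall>j<length xs. A (xs!j) w = 0)"
  proof (rule kill_list)
    fix i u assume "i \<in> set xs"
    then obtain a b where i: "i = (a,b)" "a < b" "b < d" by (auto simp: xs_def set_poslist)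
    show "\<exists>k. (A i ^^ k) u = 0" using E_nil[of a b u] i by (simp add: A_def)
  next
    fix i u assume "i \<in> set xs" "Inv u"
    then obtain a b y' where i: "i = (a,b)" "a < b" "b < d" and u: "u \<in> W (ci y', g, de)" "Lc d y \<le> Lc d y'"
      by (auto simp: xs_def set_poslist Inv_def)
    have "E a b u \<in> W (ci (ish y' a b), g, de)" using E_Wi[OF _ _ _ u(1), of a b] i by simp
    moreover have "Lc d (ish y' a b) = Lc d y' + 2 * int b - 2 * int a" using Lc_ish[of a d b y'] i by simp
    ultimately show "Inv (A i u)" using u i by (auto simp: Inv_def A_def intro!: exI[of _ "ish y' a b"])
  next
    fix p u j assume p: "p < length xs" and "Inv u" and z: "\<forall>j<p. A (xs!j) u = 0" and j: "j < p"
    have "xs!j \<in> set xs" "xs!p \<in> set xs" using p j by auto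
    then obtain a b c e where ab: "xs!j = (a,b)" "a < b" "b < d" and ce: "xs!p = (c,e)" "c < e" "e < d"
      by (auto simp: xs_def set_poslist)
    have "A (xs!j) u = 0" using z j by blast
    then have Eab: "E a b u = 0" using ab by (simp add: A_def)
    have c: "E a b (E c e u) = (if b = c then E a e u else 0) - (if e = a then E c b u else 0)"
      using E_comm[of a b c e u] ab ce Eab E_zero by simp
    have 1: "E a e u = 0" if bc: "b = c"
    proof -
      have "(a,e) \<in> set xs" using ab ce bc by (auto simp: xs_def set_poslist)
      moreover have "(\<lambda>(a,b). int a - int b) (a,e) < (\<lambda>(a,b). int a - int b) (xs!p)" using ab ce bc by simp
      ultimately obtain j' where "j' < p" "xs!j' = (a,e)" using poslist_order[of p d "(a,e)"] p by (auto simp: xs_def)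
      then show ?thesis using z by (auto simp: A_def)
    qed
    have 2: "E c b u = 0" if ea: "e = a"
    proof -
      have "(c,b) \<in> set xs" using ab ce ea by (auto simp: xs_def set_poslist)
      moreover have "(\<lambda>(a,b). int a - int b) (c,b) < (\<lambda>(a,b). int a - int b) (xs!p)" using ab ce ea by simp
      ultimately obtain j' where "j' < p" "xs!j' = (c,b)" using poslist_order[of p d "(c,b)"] p by (auto simp: xs_def)
      then show ?thesis using z by (auto simp: A_def)
    qed
    show "A (xs!j) (A (xs!p) u) = 0" using c 1 2 ab ce by (auto simp: A_def)
  next
    show "Inv v" using v by (auto simp: Inv_def)
  next
    show "v \<noteq> 0" by (rule v(2))
  qed
  then obtain w where w: "Inv w" "w \<noteq> 0" "\<forall>j<length xs. A (xs!j) w = 0" by blast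
  have "E a b w = 0" if "a < b" "b < d" for a b
  proof -
    have "(a,b) \<in> set xs" using that by (simp add: xs_def set_poslist)
    then obtain j where "j < length xs" "xs!j = (a,b)" by (auto simp: in_set_conv_nth)
    then show ?thesis using w(3) by (auto simp: A_def)
  qed
  then show ?thesis using w(1,2) unfolding Inv_def by blast
qed

lemma cas_bound: "of_int (Lc d y) \<le> Re (cas (ci y))"
proof -
  define t where "t = (\<Sum>k<d. real_of_int (y k)) / real d"
  have mb: "mbar (ci y) = complex_of_real t" by (simp add: mbar_def ci_def t_def)
  have "Re (cas (ci y)) = (\<Sum>a<d. \<Sum>b<d. if a < b then real_of_int (y a - y b) else if a = b then (real_of_int (y a) - t)^2 else 0)"
  proof -
    have "Re (cas (ci y)) = (\<Sum>a<d. \<Sum>b<d. Re (if a < b then ci y a - ci y b else if a = b then (ci y a - mbar (ci y))^2 else 0))"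
      by (simp add: cas_def)
    also have "\<dots> = (\<Sum>a<d. \<Sum>b<d. if a < b then real_of_int (y a - y b) else if a = b then (real_of_int (y a) - t)^2 else 0)"
    proof (intro sum.cong refl)
      fix a b
      have e: "ci y a - complex_of_real t = complex_of_real (real_of_int (y a) - t)" by (simp add: ci_def)
      have F: "Re ((ci y a - mbar (ci y))^2) = (real_of_int (y a) - t)^2"
        unfolding mb e by (simp only: of_real_power[symmetric] Re_complex_of_real)
      show "Re (if a < b then ci y a - ci y b else if a = b then (ci y a - mbar (ci y))^2 else 0)
        = (if a < b then real_of_int (y a - y b) else if a = b then (real_of_int (y a) - t)^2 else 0)"
        using F by (auto simp: ci_def)
    qed
    finally show ?thesis .
  qed
  also have "\<dots> \<ge> (\<Sum>a<d. \<Sum>b<d. if a < b then real_of_int (y a - y b) else 0)"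
    by (intro sum_mono) auto
  also have "(\<Sum>a<d. \<Sum>b<d. if a < b then real_of_int (y a - y b) else 0) = real_of_int (\<Sum>a<d. \<Sum>b<d. if a < b then y a - y b else 0)"
    by (simp add: of_int_sum if_distrib[of real_of_int] cong: if_cong)
  also have "\<dots> = of_int (Lc d y)" by (simp add: Lc_pairs Lc_def)
  finally show ?thesis by simp
qed

lemma sq_ish: assumes "p \<noteq> r" "p < d" "r < d"
  shows "(\<Sum>k<d. (ish y p r k)^2) = (\<Sum>k<d. (y k)^2) + 2 * y p - 2 * y r + 2"
proof -
  have "(\<Sum>k<d. (ish y p r k)^2) = (\<Sum>k<d. (y k)^2 + (if k = p then 2 * y p + 1 else 0) + (if k = r then 1 - 2 * y r else 0))"
    using assms by (intro sum.cong refl) (auto simp: ish_def power2_eq_square algebra_simps)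
  also have "\<dots> = (\<Sum>k<d. (y k)^2) + 2 * y p - 2 * y r + 2" using assms by (simp add: sum.distrib)
  finally show ?thesis .
qed

lemma descent:
  "v \<in> W (ci y, g, de) \<Longrightarrow> v \<noteq> 0 \<Longrightarrow> Om v = sc c v \<Longrightarrow>
   \<exists>y' u. u \<in> W (ci y', g, de) \<and> u \<noteq> 0 \<and> Om u = sc c u \<and> (\<forall>i. Suc i < d \<longrightarrow> \<bar>y' i - y' (Suc i)\<bar> \<le> 1)"
proof (induction "nat (\<Sum>k<d. (y k)^2)" arbitrary: y v rule: less_induct)
  case less
  show ?case
  proof (cases "\<forall>i. Suc i < d \<longrightarrow> \<bar>y i - y (Suc i)\<bar> \<le> 1")
    case True then show ?thesis using less.prems by blast
  next
    case False
    then obtain i where i: "Suc i < d" "\<bar>y i - y (Suc i)\<bar> > 1" by auto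
    have lab: "ci y i - ci y (Suc i) = of_int (y i - y (Suc i))" by (simp add: ci_def)
    show ?thesis
    proof (cases "y i - y (Suc i) > 1")
      case True
      define u where "u = E (Suc i) i v"
      have "\<And>r::nat. ci y i - ci y (Suc i) + of_nat r \<noteq> 0"
      proof -
        fix r :: nat
        have "ci y i - ci y (Suc i) + of_nat r = of_int (y i - y (Suc i) + int r)" by (simp add: lab)
        moreover have "y i - y (Suc i) + int r \<noteq> 0" using True by simp
        ultimately show "ci y i - ci y (Suc i) + of_nat r \<noteq> 0" by (simp only: of_int_eq_0_iff) simp
      qed
      then have u0: "u \<noteq> 0" unfolding u_def using F_inj[OF i(1) less.prems(1,2)] by blast
      have uW: "u \<in> W (ci (ish y (Suc i) i), g, de)" unfolding u_def using E_Wi[OF _ _ _ less.prems(1)] i by simp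
      have uO: "Om u = sc c u" unfolding u_def using Om_comm[of "Suc i" i v] i less.prems(3) by (simp add: E_scale)
      have "(\<Sum>k<d. (ish y (Suc i) i k)^2) = (\<Sum>k<d. (y k)^2) + 2 * y (Suc i) - 2 * y i + 2"
        using sq_ish[of "Suc i" i y] i by simp
      moreover have "(\<Sum>k<d. (ish y (Suc i) i k)^2) \<ge> 0" by (simp add: sum_nonneg)
      ultimately have "nat (\<Sum>k<d. (ish y (Suc i) i k)^2) < nat (\<Sum>k<d. (y k)^2)" using True
        by (simp add: nat_less_eq_zless)
      then show ?thesis using less.hyps uW u0 uO by blast
    next
      case False
      then have neg: "y i - y (Suc i) < -1" using i by simp
      define u where "u = E i (Suc i) v"
      have "\<And>r::nat. ci y i - ci y (Suc i) - of_nat r \<noteq> 0"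
      proof -
        fix r :: nat
        have "ci y i - ci y (Suc i) - of_nat r = of_int (y i - y (Suc i) - int r)" by (simp add: lab)
        moreover have "y i - y (Suc i) - int r \<noteq> 0" using neg by simp
        ultimately show "ci y i - ci y (Suc i) - of_nat r \<noteq> 0" by (simp only: of_int_eq_0_iff) simp
      qed
      then have u0: "u \<noteq> 0" unfolding u_def using E_inj[OF i(1) less.prems(1,2)] by blast
      have uW: "u \<in> W (ci (ish y i (Suc i)), g, de)" unfolding u_def using E_Wi[OF _ _ _ less.prems(1)] i by simp
      have uO: "Om u = sc c u" unfolding u_def using Om_comm[of i "Suc i" v] i less.prems(3) by (simp add: E_scale)
      have "(\<Sum>k<d. (ish y i (Suc i) k)^2) = (\<Sum>k<d. (y k)^2) + 2 * y i - 2 * y (Suc i) + 2"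
        using sq_ish[of i "Suc i" y] i by simp
      moreover have "(\<Sum>k<d. (ish y i (Suc i) k)^2) \<ge> 0" by (simp add: sum_nonneg)
      ultimately have "nat (\<Sum>k<d. (ish y i (Suc i) k)^2) < nat (\<Sum>k<d. (y k)^2)" using neg
        by (simp add: nat_less_eq_zless)
      then show ?thesis using less.hyps uW u0 uO by blast
    qed
  qed
qed

end

definition nz :: "nat \<Rightarrow> (nat \<Rightarrow> int) \<Rightarrow> nat \<Rightarrow> int" where
  "nz d y = (\<lambda>k. if k < d then y k - y (d - 1) else 0)"

definition Tset :: "nat \<Rightarrow> (nat \<Rightarrow> int) set" where
  "Tset d = {z. \<forall>k. (k < d \<longrightarrow> \<bar>z k\<bar> \<le> int d) \<and> (d \<le> k \<longrightarrow> z k = 0)}"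

lemma finite_Tset: "finite (Tset d)"
proof -
  have "Tset d \<subseteq> (\<lambda>f. \<lambda>k. if k < d then f k else 0) ` (PiE {..<d} (\<lambda>_. {- int d..int d}))"
  proof
    fix z assume z: "z \<in> Tset d"
    have "restrict z {..<d} \<in> PiE {..<d} (\<lambda>_. {- int d..int d})" using z by (auto simp: Tset_def abs_le_iff)
    moreover have "z = (\<lambda>k. if k < d then restrict z {..<d} k else 0)" using z by (auto simp: Tset_def)
    ultimately show "z \<in> (\<lambda>f. \<lambda>k. if k < d then f k else 0) ` (PiE {..<d} (\<lambda>_. {- int d..int d}))" by blast
  qed
  moreover have "finite (PiE {..<d} (\<lambda>_. {- int d..int d}))" by (rule finite_PiE) auto
  ultimately show ?thesis by (meson finite_imageI finite_subset)
qed

lemma label_bound: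
  assumes lab: "\<forall>i. Suc i < d \<longrightarrow> \<bar>y i - y (Suc i)\<bar> \<le> (1::int)" and k: "k < d"
  shows "\<bar>y k - y (d - 1)\<bar> \<le> int (d - 1 - k)"
  using k
proof (induction "d - 1 - k" arbitrary: k)
  case 0 then have "k = d - 1" by simp
  then show ?case by simp
next
  case (Suc m)
  have k1: "Suc k < d" "m = d - 1 - Suc k" using Suc by auto
  have "\<bar>y (Suc k) - y (d - 1)\<bar> \<le> int (d - 1 - Suc k)" using Suc.hyps(1)[OF k1(2)] k1 by simp
  moreover have "\<bar>y k - y (Suc k)\<bar> \<le> 1" using lab k1 by simp
  ultimately show ?case using k1 by linarith
qed

lemma nz_T: assumes "\<forall>i. Suc i < d \<longrightarrow> \<bar>y i - y (Suc i)\<bar> \<le> (1::int)" shows "nz d y \<in> Tset d"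
proof -
  have "\<bar>nz d y k\<bar> \<le> int d" if "k < d" for k
    using label_bound[OF assms that] that by (simp add: nz_def)
  then show ?thesis by (auto simp: Tset_def nz_def)
qed

context TMI begin

lemma W_nz: "W (ci y, g, de) = W (ci (nz d y), g, de)"
  by (rule W_cong[where c = "of_int (y (d - 1))"]) (simp add: ci_def nz_def)

definition evf where
  "evf u = (THE c. Om u = sc c u)"

lemma evf: assumes "u \<noteq> 0" "Om u = sc c u" shows "evf u = c"
  unfolding evf_def
proof (rule the_equality)
  show "Om u = sc c u" by (rule assms(2))
next
  fix c' assume h: "Om u = sc c' u"
  have "sc c' u = sc c u" using assms(2) h by metis
  then have "sc (c' - c) u = 0" by (simp only: V.scale_left_diff_distrib diff_self)
  then have "\<not> (c' - c \<noteq> 0)" using sc_eq0 assms(1) by blast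
  then show "c' = c" by simp
qed

lemma Om_lin: "Vector_Spaces.linear sc sc Om"
  using vs by (simp add: Vector_Spaces.linear_iff Om_add Om_scale)

lemma eig_indep:
  assumes "finite U" "\<forall>u\<in>U. u \<noteq> 0 \<and> Om u = sc (evf u) u" "inj_on evf U"
  shows "V.independent U"
  using assms
proof (induction U rule: finite_induct)
  case empty show ?case by (rule V.independent_empty)
next
  case (insert x F)
  have F1: "\<forall>u\<in>F. u \<noteq> 0 \<and> Om u = sc (evf u) u" using insert.prems(1) by blast
  have F2: "inj_on evf F" using insert.prems(2) by (rule inj_on_subset) blast
  have IF: "V.independent F" by (rule insert.IH[OF F1 F2])
  have x: "x \<noteq> 0" "Om x = sc (evf x) x" using insert.prems(1) by blast+
  have ne: "evf v \<noteq> evf x" if "v \<in> F" for v using insert.prems(2) insert.hyps(2) that by (auto simp: inj_on_def)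
  have "x \<notin> V.span F"
  proof
    assume "x \<in> V.span F"
    then obtain c where c: "x = (\<Sum>v\<in>F. sc (c v) v)" using V.span_finite[OF insert.hyps(1)] by auto
    have "Om x = (\<Sum>v\<in>F. Om (sc (c v) v))" unfolding c by (rule lin_sum[OF Om_lin])
    also have "\<dots> = (\<Sum>v\<in>F. sc (c v * evf v) v)"
    proof (intro sum.cong refl)
      fix v assume "v \<in> F"
      then have "Om v = sc (evf v) v" using insert.prems(1) by blast
      then show "Om (sc (c v) v) = sc (c v * evf v) v" by (simp add: Om_scale)
    qed
    finally have O1: "Om x = (\<Sum>v\<in>F. sc (c v * evf v) v)" .
    have "Om x = sc (evf x) x" by (rule x(2))
    also have "\<dots> = sc (evf x) (\<Sum>v\<in>F. sc (c v) v)" using c by (rule arg_cong)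
    also have "\<dots> = (\<Sum>v\<in>F. sc (evf x * c v) v)" by (simp add: V.scale_sum_right)
    finally have O2: "Om x = (\<Sum>v\<in>F. sc (evf x * c v) v)" .
    have "(\<Sum>v\<in>F. sc (c v * evf v) v) - (\<Sum>v\<in>F. sc (evf x * c v) v) = 0"
      by (simp only: O1[symmetric] O2[symmetric] diff_self)
    moreover have "(\<Sum>v\<in>F. sc (c v * (evf v - evf x)) v) = (\<Sum>v\<in>F. sc (c v * evf v) v) - (\<Sum>v\<in>F. sc (evf x * c v) v)"
      unfolding sum_subtractf[symmetric]
    proof (intro sum.cong refl)
      fix v
      have "c v * (evf v - evf x) = c v * evf v - evf x * c v" by (simp add: algebra_simps)
      then show "sc (c v * (evf v - evf x)) v = sc (c v * evf v) v - sc (evf x * c v) v"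
        by (simp only: V.scale_left_diff_distrib)
    qed
    ultimately have S0: "(\<Sum>v\<in>F. sc (c v * (evf v - evf x)) v) = 0" by (simp only:)
    have "\<forall>v\<in>F. c v * (evf v - evf x) = 0"
    proof (rule ccontr)
      assume "\<not> (\<forall>v\<in>F. c v * (evf v - evf x) = 0)"
      then have ex: "\<exists>v\<in>F. (\<lambda>v. c v * (evf v - evf x)) v \<noteq> 0" by simp
      have "\<exists>u. (\<exists>v\<in>F. u v \<noteq> 0) \<and> (\<Sum>v\<in>F. sc (u v) v) = 0"
        by (rule exI[of _ "\<lambda>v. c v * (evf v - evf x)"]) (use ex S0 in simp)
      then have "V.dependent F" unfolding V.dependent_finite[OF insert.hyps(1)] .
      then show False using IF by simp
    qed
    then have "\<forall>v\<in>F. c v = 0" using ne by auto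
    then have "x = 0" using c by simp
    then show False using x by simp
  qed
  then show ?case using V.independent_insertI IF by blast
qed

end

context TMI begin

lemma L_bounded:
  assumes fws: "finite_weight_spaces n d sc rho z D"
  shows "\<exists>M. \<forall>y v. v \<in> W (ci y, g, de) \<longrightarrow> v \<noteq> 0 \<longrightarrow> Lc d y \<le> M"
proof (rule ccontr)
  assume nb: "\<not> (\<exists>M. \<forall>y v. v \<in> W (ci y, g, de) \<longrightarrow> v \<noteq> 0 \<longrightarrow> Lc d y \<le> M)"
  have unb: "\<exists>y v. v \<in> W (ci y, g, de) \<and> v \<noteq> 0 \<and> M < Lc d y" for M
    using nb by (meson not_le)
  have "\<exists>Bf. \<forall>lam. finite (Bf lam) \<and> W lam \<subseteq> V.span (Bf lam)"
    using fws unfolding finite_weight_spaces_def by (rule choice)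
  then obtain Bf where Bf: "\<And>lam. finite (Bf lam)" "\<And>lam. W lam \<subseteq> V.span (Bf lam)" by blast
  define Bs where "Bs = (\<Union>\<tau>\<in>Tset d. Bf (ci \<tau>, g, de))"
  have fB: "finite Bs" unfolding Bs_def using finite_Tset Bf(1) by blast
  have new: "\<exists>u. u \<noteq> 0 \<and> Om u = sc (evf u) u \<and> u \<in> V.span Bs \<and> M < Re (evf u)" for M :: real
  proof -
    obtain y v where yv: "v \<in> W (ci y, g, de)" "v \<noteq> 0" "\<lceil>M\<rceil> < Lc d y" using unb by blast
    obtain w y' where w: "w \<in> W (ci y', g, de)" "w \<noteq> 0" "Lc d y \<le> Lc d y'"
       "\<forall>a b. a < b \<longrightarrow> b < d \<longrightarrow> E a b w = 0"
      using hw_exists[OF yv(1,2)] by blast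
    have Ow: "Om w = sc (cas (ci y')) w" using Om_hw[OF w(1)] w(4) by blast
    obtain y'' u where u: "u \<in> W (ci y'', g, de)" "u \<noteq> 0" "Om u = sc (cas (ci y')) u"
       "\<forall>i. Suc i < d \<longrightarrow> \<bar>y'' i - y'' (Suc i)\<bar> \<le> 1"
      using descent[OF w(1,2) Ow] by blast
    have ev: "evf u = cas (ci y')" using evf[OF u(2,3)] .
    have "u \<in> W (ci (nz d y''), g, de)" using u(1) W_nz by simp
    then have "u \<in> V.span (Bf (ci (nz d y''), g, de))" using Bf(2) by blast
    moreover have "Bf (ci (nz d y''), g, de) \<subseteq> Bs" unfolding Bs_def using nz_T[OF u(4)] by blast
    ultimately have "u \<in> V.span Bs" using V.span_mono by blast
    moreover have "M < Re (evf u)"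
    proof -
      have "M \<le> of_int \<lceil>M\<rceil>" by (rule le_of_int_ceiling)
      also have "\<dots> < of_int (Lc d y)" using yv(3) by simp
      also have "\<dots> \<le> of_int (Lc d y')" using w(3) by simp
      also have "\<dots> \<le> Re (cas (ci y'))" by (rule cas_bound)
      finally show ?thesis using ev by simp
    qed
    ultimately show ?thesis using u(2,3) ev by auto
  qed
  have "\<exists>U. finite U \<and> card U = k \<and> (\<forall>u\<in>U. u \<noteq> 0 \<and> Om u = sc (evf u) u \<and> u \<in> V.span Bs) \<and> inj_on evf U" for k
  proof (induction k)
    case 0 show ?case by (rule exI[of _ "{}"]) simp
  next
    case (Suc k)
    then obtain U where U: "finite U" "card U = k" "\<forall>u\<in>U. u \<noteq> 0 \<and> Om u = sc (evf u) u \<and> u \<in> V.span Bs" "inj_on evf U"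
      by blast
    define M where "M = Max (insert 0 ((\<lambda>u. Re (evf u)) ` U))"
    obtain u where u: "u \<noteq> 0" "Om u = sc (evf u) u" "u \<in> V.span Bs" "M < Re (evf u)" using new by blast
    have le: "Re (evf u') \<le> M" if "u' \<in> U" for u'
      unfolding M_def using U(1) that by (intro Max_ge) auto
    have nU: "u \<notin> U" using le u(4) by force
    have nE: "evf u \<notin> evf ` U" using le u(4) by force
    show ?case
      by (rule exI[of _ "insert u U"]) (use U u nU nE in \<open>auto simp: inj_on_insert\<close>)
  qed
  then obtain U where U: "finite U" "card U = Suc (card Bs)" "\<forall>u\<in>U. u \<noteq> 0 \<and> Om u = sc (evf u) u \<and> u \<in> V.span Bs" "inj_on evf U"
    by blast
  have "V.independent U" using eig_indep[OF U(1)] U(3,4) by blast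
  moreover have "U \<subseteq> V.span Bs" using U(3) by blast
  ultimately have "card U \<le> card Bs" using V.independent_span_bound[OF fB] by blast
  then show False using U(2) by simp
qed

end

definition rci :: "nat \<Rightarrow> (nat \<Rightarrow> nat) \<Rightarrow> nat \<Rightarrow> int" where
  "rci d m = (\<lambda>k. (if k < d - 1 then int (m k) else 0) - (if 0 < k \<and> k < d then int (m (k - 1)) else 0))"

lemma root_comb_rci: "root_comb d m k = of_int (rci d m k)"
  by (auto simp: root_comb_def rci_def)

lemma root_comb_add: "root_comb d (\<lambda>j. m1 j + m2 j) k = root_comb d m1 k + root_comb d m2 k"
  by (auto simp: root_comb_def)

lemma Lc_add: "Lc d (\<lambda>k. y k + w k) = Lc d y + Lc d w"
  by (simp add: Lc_def distrib_left sum.distrib)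

lemma Lc_rci: assumes "1 \<le> d" shows "Lc d (rci d m) = 2 * (\<Sum>j<d - 1. int (m j))"
proof -
  obtain e where e: "d = Suc e" using assms by (cases d) auto
  define c where "c = (\<lambda>a::nat. int d - 1 - 2 * int a)"
  have "Lc d (rci d m) = (\<Sum>a<Suc e. c a * ((if a < e then int (m a) else 0) - (if 0 < a \<and> a < Suc e then int (m (a - 1)) else 0)))"
    unfolding Lc_def rci_def c_def e by simp
  also have "\<dots> = (\<Sum>a<Suc e. c a * (if a < e then int (m a) else 0) - c a * (if 0 < a then int (m (a - 1)) else 0))"
    by (intro sum.cong refl) (simp add: right_diff_distrib)
  also have "\<dots> = (\<Sum>a<Suc e. c a * (if a < e then int (m a) else 0)) - (\<Sum>a<Suc e. c a * (if 0 < a then int (m (a - 1)) else 0))"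
    by (rule sum_subtractf)
  also have "(\<Sum>a<Suc e. c a * (if a < e then int (m a) else 0)) = (\<Sum>a<e. c a * int (m a))"
    by simp
  also have "(\<Sum>a<Suc e. c a * (if 0 < a then int (m (a - 1)) else 0)) = (\<Sum>a<e. c (Suc a) * int (m a))"
    by (subst sum.lessThan_Suc_shift) simp
  also have "(\<Sum>a<e. c a * int (m a)) - (\<Sum>a<e. c (Suc a) * int (m a)) = (\<Sum>a<e. 2 * int (m a))"
    unfolding sum_subtractf[symmetric] by (intro sum.cong refl) (simp add: c_def algebra_simps)
  finally show ?thesis using e by (simp add: sum_distrib_left)
qed

theorem lemma3p5:
  fixes n d :: nat and q :: "nat \<Rightarrow> nat \<Rightarrow> complex"
    and sc :: "complex \<Rightarrow> 'v::ab_group_add \<Rightarrow> 'v"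
    and rho :: "complex mat \<Rightarrow> (nat \<Rightarrow> int) \<Rightarrow> 'v \<Rightarrow> 'v"
    and z :: "(nat \<Rightarrow> int) \<Rightarrow> (nat \<Rightarrow> int) \<Rightarrow> 'v \<Rightarrow> 'v"
    and D :: "nat \<Rightarrow> 'v \<Rightarrow> 'v"
  assumes "2 \<le> n" and "2 \<le> d" and "qmatrix n q"
    and "tau_hat_module n d q sc rho z D"
    and "irreducible_module n d q sc rho z D"
    and "integrable n d sc rho z D"
    and "finite_weight_spaces n d sc rho z D"
  shows "\<exists>lam. weight_space n d sc rho z D lam \<noteq> {0}
           \<and> (\<forall>m::nat \<Rightarrow> nat. (\<exists>j < d - 1. m j \<noteq> 0) \<longrightarrow>
                weight_space n d sc rho z D (shift_weight d lam m) = {0})"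
proof -
  interpret T: TMI n d q sc rho z D
    using assms(2,4,6) by (simp add: TMI_def TMI_axioms_def TM_def)
  have "(UNIV :: 'v set) \<noteq> {0}"
    using assms(5) unfolding irreducible_module_def by (rule conjunct1)
  then obtain v :: 'v where v: "v \<noteq> 0" by blast
  have wm: "weight_module n d sc rho z D" using assms(6) unfolding integrable_def by (rule conjunct1)
  then have sp: "UNIV \<subseteq> T.V.span (\<Union>lam. T.W lam)" unfolding weight_module_def .
  have ex: "\<exists>lam. \<exists>x. x \<in> T.W lam \<and> x \<noteq> 0"
  proof (rule ccontr)
    assume "\<not> ?thesis"
    then have "(\<Union>lam. T.W lam) \<subseteq> {0}" by blast
    then have "T.V.span (\<Union>lam. T.W lam) \<subseteq> T.V.span {0}" by (rule T.V.span_mono)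
    also have "T.V.span {0} = {0}" by (auto simp: T.V.span_singleton)
    finally have "UNIV \<subseteq> {0::'v}" using sp by (rule subset_trans[rotated])
    then show False using v by blast
  qed
  then obtain lam x where lx: "x \<in> T.W lam" "x \<noteq> 0" by blast
  obtain mu0 g0 de0 where "lam = (mu0, g0, de0)" by (cases lam) auto
  then have v0: "x \<in> T.W (mu0, g0, de0)" "x \<noteq> 0" using lx by auto
  define mf where "mf i = (SOME m::int. mu0 i - mu0 (Suc i) = of_int m)" for i
  have mf: "mu0 i - mu0 (Suc i) = of_int (mf i)" if "Suc i < d" for i
    unfolding mf_def using T.integral[OF that v0] by (rule someI_ex)
  define y0 where "y0 k = (\<Sum>j = k..<d - 1. mf j)" for k
  have y0: "mu0 k = of_int (y0 k) + mu0 (d - 1)" if k: "k < d" for k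
  proof -
    have "(\<Sum>j = k..<d - 1. (- mu0 (Suc j)) - (- mu0 j)) = (- mu0 (d - 1)) - (- mu0 k)"
      using k by (intro sum_Suc_diff') simp
    moreover have "(\<Sum>j = k..<d - 1. (- mu0 (Suc j)) - (- mu0 j)) = (\<Sum>j = k..<d - 1. of_int (mf j))"
    proof (intro sum.cong refl)
      fix j assume "j \<in> {k..<d - 1}"
      then have "Suc j < d" by auto
      then show "- mu0 (Suc j) - - mu0 j = of_int (mf j)" using mf[of j] by simp
    qed
    ultimately show ?thesis by (simp add: y0_def diff_eq_eq)
  qed
  have Wy0: "T.W (mu0, g0, de0) = T.W (ci y0, g0, de0)"
  proof (rule T.W_cong[where c = "mu0 (d - 1)"])
    fix k assume k: "k < d"
    show "mu0 k = ci y0 k + mu0 (d - 1)" unfolding ci_def by (rule y0[OF k])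
  qed
  obtain M where M: "\<And>y x. x \<in> T.W (ci y, g0, de0) \<Longrightarrow> x \<noteq> 0 \<Longrightarrow> Lc d y \<le> M"
    using T.L_bounded[OF assms(7), of g0 de0] by blast
  define lam0 where "lam0 = (mu0, g0, de0)"
  define H where "H m = (\<Sum>j<d - 1. m j)" for m :: "nat \<Rightarrow> nat"
  have Wsh: "T.W (shift_weight d lam0 m) = T.W (ci (\<lambda>k. y0 k + rci d m k), g0, de0)" for m
    unfolding lam0_def shift_weight_def prod.case
  proof (rule T.W_cong[where c = "mu0 (d - 1)"])
    fix k assume k: "k < d"
    show "mu0 k + root_comb d m k = ci (\<lambda>k. y0 k + rci d m k) k + mu0 (d - 1)"
      by (subst y0[OF k]) (simp add: ci_def root_comb_rci)
  qed
  define Hs where "Hs = {H m | m. T.W (shift_weight d lam0 m) \<noteq> {0}}"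
  have Hbound: "h \<le> nat (M - Lc d y0)" if hH: "h \<in> Hs" for h
  proof -
    obtain m where m: "h = H m" "T.W (shift_weight d lam0 m) \<noteq> {0}" using hH Hs_def by blast
    then have "T.W (ci (\<lambda>k. y0 k + rci d m k), g0, de0) \<noteq> {0}" using Wsh by simp
    then obtain x where x: "x \<in> T.W (ci (\<lambda>k. y0 k + rci d m k), g0, de0)" "x \<noteq> 0"
      using T.W_zero by blast
    have "Lc d (\<lambda>k. y0 k + rci d m k) \<le> M" by (rule M[OF x])
    then have "Lc d y0 + 2 * int (H m) \<le> M" using Lc_rci[of d m] assms(2) by (simp add: Lc_add H_def)
    then show ?thesis using m by simp
  qed
  have fin: "finite Hs" by (rule finite_subset[of _ "{..nat (M - Lc d y0)}"]) (use Hbound in auto)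
  have sh0: "shift_weight d lam0 (\<lambda>_. 0) = lam0" by (simp add: shift_weight_def lam0_def root_comb_def fun_eq_iff)
  have "H (\<lambda>_. 0) \<in> Hs" unfolding Hs_def using sh0 v0 lam0_def by auto
  then have ne: "Hs \<noteq> {}" by blast
  have "Max Hs \<in> Hs" by (rule Max_in[OF fin ne])
  then obtain ms where ms0: "Max Hs = H ms" "T.W (shift_weight d lam0 ms) \<noteq> {0}"
    unfolding Hs_def by blast
  then have ms: "H ms = Max Hs" "T.W (shift_weight d lam0 ms) \<noteq> {0}" by auto
  show ?thesis
  proof (intro exI conjI allI impI)
    show "T.W (shift_weight d lam0 ms) \<noteq> {0}" by (rule ms(2))
  next
    fix m :: "nat \<Rightarrow> nat" assume "\<exists>j < d - 1. m j \<noteq> 0"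
    then obtain j where j: "j < d - 1" "m j \<noteq> 0" by blast
    have eq: "shift_weight d (shift_weight d lam0 ms) m = shift_weight d lam0 (\<lambda>k. ms k + m k)"
      by (simp add: shift_weight_def lam0_def root_comb_add add.assoc)
    have "H (\<lambda>k. ms k + m k) = H ms + H m" by (simp add: H_def sum.distrib)
    moreover have "H m \<ge> m j" unfolding H_def using j by (intro member_le_sum) auto
    ultimately have gt: "H (\<lambda>k. ms k + m k) > Max Hs" using ms(1) j by simp
    show "T.W (shift_weight d (shift_weight d lam0 ms) m) = {0}"
    proof (rule ccontr)
      assume "T.W (shift_weight d (shift_weight d lam0 ms) m) \<noteq> {0}"
      then have "H (\<lambda>k. ms k + m k) \<in> Hs" unfolding Hs_def eq by blast
      then have "H (\<lambda>k. ms k + m k) \<le> Max Hs" using fin by simp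
      then show False using gt by simp
    qed
  qed
qed

end
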